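(* Let $\mathcal G_1,\mathcal G_2$ be finite graphs. Suppose there exist $\beta_1,\beta_2\in(0,\infty)$ such that \[ \lim_{n\to\infty}\frac{\log s_n(W(\mathcal G_i))}{n\log n}=\beta_i \quad\text{for } i=1,2 . \] Then \[ \lim_{n\to\infty}\frac{\log s_n(W(\mathcal G_1\star\mathcal G_2))}{n\log n}=\max\{\beta_1,\beta_2\}. \] Furthermore, if at least one of $\mathcal G_1,\mathcal G_2$ is not complete, then \[ \gamma(\mathcal G_1\star\mathcal G_2)=\max(\gamma(\mathcal G_1),\gamma(\mathcal G_2)). \]
   Context: Graphs are finite simple graphs. $W(\mathcal G)$ is the right-angled Coxeter group \[ \langle \sigma_v,\ v\in\mathcal G\mid \sigma_v^2=1,\ \sigma_v\sigma_w=\sigma_w\sigma_v \text{ for adjacent } v,w\rangle . \] $s_n(\Gamma)$ is the number of subgroups of index exactly $n$ in $\Gamma$. The join $\mathcal G_1\star\mathcal G_2$ is the graph on the disjoint union of the vertex sets. Two vertices in the same $\mathcal G_i$ are adjacent iff they are adjacent in $\mathcal G_i$, and any two vertices in different $\mathcal G_i$ are adjacent. In particular $W(\mathcal G_1\star\mathcal G_2)=W(\mathcal G_1)\times W(\mathcal G_2)$. A clique collection is an induced subgraph whose connected components are complete graphs. For a clique collection $\mathcal C$ with components $\mathcal C_1,\dots,\mathcal C_q$, set $w(\mathcal C)=\sum_i(1-2^{-|\mathcal C_i|})$. Then $\gamma(\mathcal G)$ is the maximum of $w(\mathcal C)$ over all clique collections $\mathcal C$ of $\mathcal G$. *)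

theory Defs
  imports "HOL-Analysis.Analysis" "HOL-Algebra.Coset"
begin

text \<open>A finite simple graph is a pair (V, E) of a vertex set and a symmetric irreflexive
  adjacency predicate; only its restriction to V matters.\<close>

type_synonym 'a graph = "'a set \<times> ('a \<Rightarrow> 'a \<Rightarrow> bool)"

definition verts :: "'a graph \<Rightarrow> 'a set" where "verts G = fst G"
definition adj :: "'a graph \<Rightarrow> 'a \<Rightarrow> 'a \<Rightarrow> bool" where "adj G = snd G"

definition finite_simple_graph :: "'a graph \<Rightarrow> bool" where
  "finite_simple_graph G \<longleftrightarrow> finite (verts G) \<and>
     (\<forall>v\<in>verts G. \<forall>w\<in>verts G. adj G v w \<longleftrightarrow> adj G w v) \<and>
     (\<forall>v\<in>verts G. \<not> adj G v v)"

definition complete_graph :: "'a graph \<Rightarrow> bool" where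
  "complete_graph G \<longleftrightarrow> (\<forall>v\<in>verts G. \<forall>w\<in>verts G. v \<noteq> w \<longrightarrow> adj G v w)"

fun join_adj :: "('a \<Rightarrow> 'a \<Rightarrow> bool) \<Rightarrow> ('b \<Rightarrow> 'b \<Rightarrow> bool) \<Rightarrow> 'a + 'b \<Rightarrow> 'a + 'b \<Rightarrow> bool" where
  "join_adj E1 E2 (Inl a) (Inl b) = E1 a b"
| "join_adj E1 E2 (Inr a) (Inr b) = E2 a b"
| "join_adj E1 E2 (Inl a) (Inr b) = True"
| "join_adj E1 E2 (Inr a) (Inl b) = True"

definition graph_join :: "'a graph \<Rightarrow> 'b graph \<Rightarrow> ('a + 'b) graph" where
  "graph_join G1 G2 = (Inl ` verts G1 \<union> Inr ` verts G2, join_adj (adj G1) (adj G2))"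

inductive word_eq :: "'a graph \<Rightarrow> 'a list \<Rightarrow> 'a list \<Rightarrow> bool" for G where
  refl: "word_eq G xs xs"
| sym: "word_eq G xs ys \<Longrightarrow> word_eq G ys xs"
| trans: "word_eq G xs ys \<Longrightarrow> word_eq G ys zs \<Longrightarrow> word_eq G xs zs"
| square: "v \<in> verts G \<Longrightarrow> word_eq G (xs @ [v, v] @ ys) (xs @ ys)"
| commute: "v \<in> verts G \<Longrightarrow> w \<in> verts G \<Longrightarrow> adj G v w \<Longrightarrow>
              word_eq G (xs @ [v, w] @ ys) (xs @ [w, v] @ ys)"

definition words :: "'a graph \<Rightarrow> 'a list set" where
  "words G = {xs. set xs \<subseteq> verts G}"

definition word_rel :: "'a graph \<Rightarrow> ('a list \<times> 'a list) set" where
  "word_rel G = {(xs, ys). xs \<in> words G \<and> ys \<in> words G \<and> word_eq G xs ys}"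

definition RACG :: "'a graph \<Rightarrow> 'a list set monoid" where
  "RACG G = \<lparr> carrier = words G // word_rel G,
              mult = (\<lambda>X Y. \<Union>x\<in>X. \<Union>y\<in>Y. word_rel G `` {x @ y}),
              one = word_rel G `` {[]} \<rparr>"

definition num_subgroups_index :: "('g, 'm) monoid_scheme \<Rightarrow> nat \<Rightarrow> nat" where
  "num_subgroups_index Gr n = card {H. subgroup H Gr \<and> finite (rcosets\<^bsub>Gr\<^esub> H) \<and> card (rcosets\<^bsub>Gr\<^esub> H) = n}"

definition induced_component :: "'a graph \<Rightarrow> 'a set \<Rightarrow> 'a \<Rightarrow> 'a set" where
  "induced_component G C x =
     {y \<in> C. (x, y) \<in> ({(u, v). u \<in> C \<and> v \<in> C \<and> adj G u v})\<^sup>*}"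

definition induced_components :: "'a graph \<Rightarrow> 'a set \<Rightarrow> 'a set set" where
  "induced_components G C = induced_component G C ` C"

definition clique_collection :: "'a graph \<Rightarrow> 'a set \<Rightarrow> bool" where
  "clique_collection G C \<longleftrightarrow> C \<subseteq> verts G \<and>
     (\<forall>K\<in>induced_components G C. \<forall>v\<in>K. \<forall>w\<in>K. v \<noteq> w \<longrightarrow> adj G v w)"

definition cc_weight :: "'a graph \<Rightarrow> 'a set \<Rightarrow> real" where
  "cc_weight G C = (\<Sum>K\<in>induced_components G C. 1 - 2 powi (- int (card K)))"

definition gamma :: "'a graph \<Rightarrow> real" where
  "gamma G = Max (cc_weight G ` {C. clique_collection G C})"

end

theory Submission
  imports Defs
begin

lemma word_eq_ctx:
  assumes "word_eq G xs ys" shows "word_eq G (as @ xs @ bs) (as @ ys @ bs)"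
  using assms
proof (induction rule: word_eq.induct)
  case (refl xs) then show ?case by (rule word_eq.refl)
next
  case (sym xs ys) from sym.IH show ?case by (rule word_eq.sym)
next
  case (trans xs ys zs) then show ?case by (metis word_eq.trans)
next
  case (square v xs ys)
  have "word_eq G ((as @ xs) @ [v, v] @ (ys @ bs)) ((as @ xs) @ (ys @ bs))"
    using square by (rule word_eq.square)
  then show ?case by simp
next
  case (commute v w xs ys)
  have "word_eq G ((as @ xs) @ [v, w] @ (ys @ bs)) ((as @ xs) @ [w, v] @ (ys @ bs))"
    using commute by (intro word_eq.commute)
  then show ?case by simp
qed

lemma word_eq_app:
  assumes "word_eq G xs xs'" "word_eq G ys ys'"
  shows "word_eq G (xs @ ys) (xs' @ ys')"
proof -
  have "word_eq G ([] @ xs @ ys) ([] @ xs' @ ys)" by (rule word_eq_ctx[OF assms(1)])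
  moreover have "word_eq G (xs' @ ys @ []) (xs' @ ys' @ [])" by (rule word_eq_ctx[OF assms(2)])
  ultimately show ?thesis by (auto intro: word_eq.trans)
qed

lemma word_eq_rev_inv:
  assumes "set xs \<subseteq> verts G" shows "word_eq G (rev xs @ xs) []"
  using assms
proof (induction xs)
  case Nil then show ?case by (simp add: word_eq.refl)
next
  case (Cons x xs)
  have "word_eq G (rev xs @ [x, x] @ xs) (rev xs @ xs)"
    using Cons.prems by (intro word_eq.square) auto
  then have "word_eq G (rev (x # xs) @ x # xs) (rev xs @ xs)" by simp
  with Cons show ?case by (auto intro: word_eq.trans)
qed

definition cls :: "'a graph \<Rightarrow> 'a list \<Rightarrow> 'a list set" where
  "cls G x = word_rel G `` {x}"

lemma equiv_word_rel: "equiv (words G) (word_rel G)"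
  unfolding equiv_def refl_on_def sym_def trans_def word_rel_def
  by (auto intro: word_eq.refl word_eq.sym word_eq.trans)

lemma words_append[simp]: "xs @ ys \<in> words G \<longleftrightarrow> xs \<in> words G \<and> ys \<in> words G"
  by (auto simp: words_def)

lemma words_Nil[simp]: "[] \<in> words G" by (simp add: words_def)
lemma words_rev[simp]: "rev xs \<in> words G \<longleftrightarrow> xs \<in> words G" by (simp add: words_def)

lemma cls_eq_iff:
  assumes "x \<in> words G" "y \<in> words G"
  shows "cls G x = cls G y \<longleftrightarrow> word_eq G x y"
  using eq_equiv_class_iff[OF equiv_word_rel assms] unfolding cls_def word_rel_def
  using assms by auto

lemma cls_in_carrier: "x \<in> words G \<Longrightarrow> cls G x \<in> carrier (RACG G)"
  by (simp add: RACG_def cls_def quotientI)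

lemma carrier_RACG_E:
  assumes "X \<in> carrier (RACG G)" obtains x where "x \<in> words G" "X = cls G x"
  using assms by (auto simp: RACG_def cls_def elim!: quotientE)

lemma self_in_cls: "x \<in> words G \<Longrightarrow> x \<in> cls G x"
  by (simp add: cls_def word_rel_def word_eq.refl)

lemma in_cls_iff: "y \<in> cls G x \<longleftrightarrow> x \<in> words G \<and> y \<in> words G \<and> word_eq G x y"
  by (simp add: cls_def word_rel_def)

lemma mult_cls:
  assumes "x \<in> words G" "y \<in> words G"
  shows "cls G x \<otimes>\<^bsub>RACG G\<^esub> cls G y = cls G (x @ y)"
proof -
  have "\<And>x' y'. x' \<in> cls G x \<Longrightarrow> y' \<in> cls G y \<Longrightarrow> word_rel G `` {x' @ y'} = cls G (x @ y)"
  proof -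
    fix x' y' assume a: "x' \<in> cls G x" "y' \<in> cls G y"
    then have "x' \<in> words G" "y' \<in> words G" "word_eq G x x'" "word_eq G y y'"
      by (auto simp: in_cls_iff)
    then have "cls G (x' @ y') = cls G (x @ y)"
      using assms by (subst cls_eq_iff) (auto intro: word_eq_app word_eq.sym)
    then show "word_rel G `` {x' @ y'} = cls G (x @ y)" by (simp add: cls_def)
  qed
  moreover have "x \<in> cls G x" "y \<in> cls G y" using assms by (auto intro: self_in_cls)
  ultimately show ?thesis unfolding RACG_def by auto
qed

lemma one_RACG: "\<one>\<^bsub>RACG G\<^esub> = cls G []"
  by (simp add: RACG_def cls_def)

lemma group_RACG: "group (RACG G)"
proof (rule groupI)
  fix X Y assume "X \<in> carrier (RACG G)" "Y \<in> carrier (RACG G)"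
  then obtain x y where "x \<in> words G" "X = cls G x" "y \<in> words G" "Y = cls G y"
    by (metis carrier_RACG_E)
  then show "X \<otimes>\<^bsub>RACG G\<^esub> Y \<in> carrier (RACG G)"
    by (simp add: mult_cls cls_in_carrier)
next
  show "\<one>\<^bsub>RACG G\<^esub> \<in> carrier (RACG G)" by (simp add: one_RACG cls_in_carrier)
next
  fix X Y Z assume "X \<in> carrier (RACG G)" "Y \<in> carrier (RACG G)" "Z \<in> carrier (RACG G)"
  then obtain x y z where "x \<in> words G" "X = cls G x" "y \<in> words G" "Y = cls G y"
     "z \<in> words G" "Z = cls G z"
    by (metis carrier_RACG_E)
  then show "X \<otimes>\<^bsub>RACG G\<^esub> Y \<otimes>\<^bsub>RACG G\<^esub> Z = X \<otimes>\<^bsub>RACG G\<^esub> (Y \<otimes>\<^bsub>RACG G\<^esub> Z)"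
    by (simp add: mult_cls)
next
  fix X assume "X \<in> carrier (RACG G)"
  then obtain x where "x \<in> words G" "X = cls G x" by (metis carrier_RACG_E)
  then show "\<one>\<^bsub>RACG G\<^esub> \<otimes>\<^bsub>RACG G\<^esub> X = X"
    by (simp add: mult_cls one_RACG)
next
  fix X assume "X \<in> carrier (RACG G)"
  then obtain x where x: "x \<in> words G" "X = cls G x" by (metis carrier_RACG_E)
  then have "cls G (rev x) \<otimes>\<^bsub>RACG G\<^esub> X = cls G []"
    by (simp add: mult_cls cls_eq_iff word_eq_rev_inv words_def)
  then show "\<exists>Y\<in>carrier (RACG G). Y \<otimes>\<^bsub>RACG G\<^esub> X = \<one>\<^bsub>RACG G\<^esub>"
    using x by (intro bexI[of _ "cls G (rev x)"]) (auto simp: one_RACG cls_in_carrier)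
qed

definition gens :: "'a graph \<Rightarrow> 'a list set set" where
  "gens G = (\<lambda>v. cls G [v]) ` verts G"

lemma cls_foldl:
  assumes "x \<in> words G"
  shows "cls G x = foldl (\<lambda>a s. a \<otimes>\<^bsub>RACG G\<^esub> s) (\<one>\<^bsub>RACG G\<^esub>) (map (\<lambda>v. cls G [v]) x)"
proof -
  have "\<And>y. y \<in> words G \<Longrightarrow> cls G (y @ x) = foldl (\<lambda>a s. a \<otimes>\<^bsub>RACG G\<^esub> s) (cls G y) (map (\<lambda>v. cls G [v]) x)"
    using assms
  proof (induction x)
    case Nil then show ?case by simp
  next
    case (Cons v x)
    have v: "[v] \<in> words G" "x \<in> words G" using Cons.prems by (auto simp: words_def)
    have "cls G (y @ v # x) = cls G ((y @ [v]) @ x)" by simp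
    also have "\<dots> = foldl (\<lambda>a s. a \<otimes>\<^bsub>RACG G\<^esub> s) (cls G (y @ [v])) (map (\<lambda>v. cls G [v]) x)"
      using Cons v by (intro Cons.IH) auto
    also have "cls G (y @ [v]) = cls G y \<otimes>\<^bsub>RACG G\<^esub> cls G [v]" using v Cons.prems by (simp add: mult_cls)
    finally show ?case by simp
  qed
  from this[of "[]"] show ?thesis by (simp add: one_RACG)
qed

lemma RACG_generated:
  assumes "X \<in> carrier (RACG G)"
  shows "\<exists>w. set w \<subseteq> gens G \<and> X = foldl (\<lambda>a s. a \<otimes>\<^bsub>RACG G\<^esub> s) (\<one>\<^bsub>RACG G\<^esub>) w"
proof -
  obtain x where x: "x \<in> words G" "X = cls G x" using assms by (rule carrier_RACG_E)
  show ?thesis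
    using x cls_foldl[OF x(1)]
    by (intro exI[of _ "map (\<lambda>v. cls G [v]) x"]) (auto simp: gens_def words_def)
qed

lemma finite_gens: "finite (verts G) \<Longrightarrow> finite (gens G)"
  by (simp add: gens_def)

lemma gens_carrier: "gens G \<subseteq> carrier (RACG G)"
  by (auto simp: gens_def words_def intro!: cls_in_carrier)

fun projl :: "('a + 'b) list \<Rightarrow> 'a list" where
  "projl [] = []"
| "projl (Inl a # xs) = a # projl xs"
| "projl (Inr b # xs) = projl xs"

fun projr :: "('a + 'b) list \<Rightarrow> 'b list" where
  "projr [] = []"
| "projr (Inl a # xs) = projr xs"
| "projr (Inr b # xs) = b # projr xs"

lemma projl_append[simp]: "projl (xs @ ys) = projl xs @ projl ys"
  by (induction xs rule: projl.induct) auto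
lemma projr_append[simp]: "projr (xs @ ys) = projr xs @ projr ys"
  by (induction xs rule: projr.induct) auto
lemma projl_map_Inl[simp]: "projl (map Inl xs) = xs" by (induction xs) auto
lemma projl_map_Inr[simp]: "projl (map Inr xs) = []" by (induction xs) auto
lemma projr_map_Inl[simp]: "projr (map Inl xs) = []" by (induction xs) auto
lemma projr_map_Inr[simp]: "projr (map Inr xs) = xs" by (induction xs) auto

lemma verts_join: "verts (graph_join G1 G2) = Inl ` verts G1 \<union> Inr ` verts G2"
  by (simp add: graph_join_def verts_def)
lemma adj_join: "adj (graph_join G1 G2) = join_adj (adj G1) (adj G2)"
  by (simp add: graph_join_def adj_def)

lemma words_join_projl: "xs \<in> words (graph_join G1 G2) \<Longrightarrow> projl xs \<in> words G1"
  by (induction xs rule: projl.induct) (auto simp: words_def verts_join)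
lemma words_join_projr: "xs \<in> words (graph_join G1 G2) \<Longrightarrow> projr xs \<in> words G2"
  by (induction xs rule: projr.induct) (auto simp: words_def verts_join)
lemma words_join_Inl: "xs \<in> words G1 \<Longrightarrow> map Inl xs \<in> words (graph_join G1 G2)"
  by (auto simp: words_def verts_join)
lemma words_join_Inr: "xs \<in> words G2 \<Longrightarrow> map Inr xs \<in> words (graph_join G1 G2)"
  by (auto simp: words_def verts_join)

lemma word_eq_projl:
  assumes "word_eq (graph_join G1 G2) xs ys" shows "word_eq G1 (projl xs) (projl ys)"
  using assms
proof (induction rule: word_eq.induct)
  case (refl xs) then show ?case by (rule word_eq.refl)
next
  case (sym xs ys) from sym.IH show ?case by (rule word_eq.sym)
next
  case (trans xs ys zs) then show ?case by (metis word_eq.trans)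
next
  case (square v xs ys)
  then show ?case
  proof (cases v)
    case (Inl a)
    with square have "a \<in> verts G1" by (auto simp: verts_join)
    then show ?thesis using Inl word_eq.square[of a G1 "projl xs" "projl ys"] by simp
  next
    case (Inr b) then show ?thesis by (simp add: word_eq.refl)
  qed
next
  case (commute v w xs ys)
  show ?case
  proof (cases v; cases w)
    fix a b assume "v = Inl a" "w = Inl b"
    with commute have "a \<in> verts G1" "b \<in> verts G1" "adj G1 a b" by (auto simp: verts_join adj_join)
    then show ?thesis using \<open>v = Inl a\<close> \<open>w = Inl b\<close> word_eq.commute[of a G1 b "projl xs" "projl ys"] by simp
  qed (auto simp: word_eq.refl)
qed

lemma word_eq_projr:
  assumes "word_eq (graph_join G1 G2) xs ys" shows "word_eq G2 (projr xs) (projr ys)"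
  using assms
proof (induction rule: word_eq.induct)
  case (refl xs) then show ?case by (rule word_eq.refl)
next
  case (sym xs ys) from sym.IH show ?case by (rule word_eq.sym)
next
  case (trans xs ys zs) then show ?case by (metis word_eq.trans)
next
  case (square v xs ys)
  then show ?case
  proof (cases v)
    case (Inr a)
    with square have "a \<in> verts G2" by (auto simp: verts_join)
    then show ?thesis using Inr word_eq.square[of a G2 "projr xs" "projr ys"] by simp
  next
    case (Inl b) then show ?thesis by (simp add: word_eq.refl)
  qed
next
  case (commute v w xs ys)
  show ?case
  proof (cases v; cases w)
    fix a b assume "v = Inr a" "w = Inr b"
    with commute have "a \<in> verts G2" "b \<in> verts G2" "adj G2 a b" by (auto simp: verts_join adj_join)
    then show ?thesis using \<open>v = Inr a\<close> \<open>w = Inr b\<close> word_eq.commute[of a G2 b "projr xs" "projr ys"] by simp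
  qed (auto simp: word_eq.refl)
qed

lemma word_eq_Inl:
  assumes "word_eq G1 xs ys" shows "word_eq (graph_join G1 G2) (map Inl xs) (map Inl ys)"
  using assms
proof (induction rule: word_eq.induct)
  case (refl xs) then show ?case by (rule word_eq.refl)
next
  case (sym xs ys) from sym.IH show ?case by (rule word_eq.sym)
next
  case (trans xs ys zs) then show ?case by (metis word_eq.trans)
next
  case (square v xs ys)
  then have "Inl v \<in> verts (graph_join G1 G2)" by (simp add: verts_join)
  then show ?case using word_eq.square[of "Inl v" "graph_join G1 G2" "map Inl xs" "map Inl ys"] by simp
next
  case (commute v w xs ys)
  then have "Inl v \<in> verts (graph_join G1 G2)" "Inl w \<in> verts (graph_join G1 G2)"
     "adj (graph_join G1 G2) (Inl v) (Inl w)" by (auto simp: verts_join adj_join)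
  then show ?case using word_eq.commute[of "Inl v" "graph_join G1 G2" "Inl w" "map Inl xs" "map Inl ys"] by simp
qed

lemma word_eq_Inr:
  assumes "word_eq G2 xs ys" shows "word_eq (graph_join G1 G2) (map Inr xs) (map Inr ys)"
  using assms
proof (induction rule: word_eq.induct)
  case (refl xs) then show ?case by (rule word_eq.refl)
next
  case (sym xs ys) from sym.IH show ?case by (rule word_eq.sym)
next
  case (trans xs ys zs) then show ?case by (metis word_eq.trans)
next
  case (square v xs ys)
  then have "Inr v \<in> verts (graph_join G1 G2)" by (simp add: verts_join)
  then show ?case using word_eq.square[of "Inr v" "graph_join G1 G2" "map Inr xs" "map Inr ys"] by simp
next
  case (commute v w xs ys)
  then have "Inr v \<in> verts (graph_join G1 G2)" "Inr w \<in> verts (graph_join G1 G2)"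
     "adj (graph_join G1 G2) (Inr v) (Inr w)" by (auto simp: verts_join adj_join)
  then show ?case using word_eq.commute[of "Inr v" "graph_join G1 G2" "Inr w" "map Inr xs" "map Inr ys"] by simp
qed

lemma move_Inr:
  assumes "b \<in> verts G2" "set u \<subseteq> verts G1"
  shows "word_eq (graph_join G1 G2) (Inr b # map Inl u) (map Inl u @ [Inr b])"
  using assms(2)
proof (induction u)
  case Nil then show ?case by (simp add: word_eq.refl)
next
  case (Cons a u)
  have "word_eq (graph_join G1 G2) ([] @ [Inr b, Inl a] @ map Inl u) ([] @ [Inl a, Inr b] @ map Inl u)"
    using assms Cons.prems by (intro word_eq.commute) (auto simp: verts_join adj_join)
  moreover have "word_eq (graph_join G1 G2) ([Inl a] @ (Inr b # map Inl u) @ []) ([Inl a] @ (map Inl u @ [Inr b]) @ [])"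
    using Cons by (intro word_eq_ctx) auto
  ultimately show ?case by (auto intro: word_eq.trans)
qed

lemma decomp_word:
  assumes "xs \<in> words (graph_join G1 G2)"
  shows "word_eq (graph_join G1 G2) xs (map Inl (projl xs) @ map Inr (projr xs))"
  using assms
proof (induction xs)
  case Nil then show ?case by (simp add: word_eq.refl)
next
  case (Cons c xs)
  then have IH: "word_eq (graph_join G1 G2) xs (map Inl (projl xs) @ map Inr (projr xs))"
    and c: "c \<in> verts (graph_join G1 G2)" and xsw: "xs \<in> words (graph_join G1 G2)"
    by (auto simp: words_def)
  have IH': "word_eq (graph_join G1 G2) ([c] @ xs @ []) ([c] @ (map Inl (projl xs) @ map Inr (projr xs)) @ [])"
    by (rule word_eq_ctx[OF IH])
  show ?case
  proof (cases c)
    case (Inl a) then show ?thesis using IH' by simp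
  next
    case (Inr b)
    then have b: "b \<in> verts G2" using c by (auto simp: verts_join)
    have u: "set (projl xs) \<subseteq> verts G1" using words_join_projl[OF xsw] by (simp add: words_def)
    have "word_eq (graph_join G1 G2) ([] @ (Inr b # map Inl (projl xs)) @ map Inr (projr xs))
        ([] @ (map Inl (projl xs) @ [Inr b]) @ map Inr (projr xs))"
      by (rule word_eq_ctx[OF move_Inr[OF b u]])
    then show ?thesis using IH' Inr by (auto intro: word_eq.trans)
  qed
qed

definition psi1 :: "'a graph \<Rightarrow> ('a + 'b) list set \<Rightarrow> 'a list set" where
  "psi1 G1 X = (\<Union>x\<in>X. cls G1 (projl x))"
definition psi2 :: "'b graph \<Rightarrow> ('a + 'b) list set \<Rightarrow> 'b list set" where
  "psi2 G2 X = (\<Union>x\<in>X. cls G2 (projr x))"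
definition iota1 :: "('a + 'b) graph \<Rightarrow> 'a list set \<Rightarrow> ('a + 'b) list set" where
  "iota1 J X = (\<Union>x\<in>X. cls J (map Inl x))"
definition iota2 :: "('a + 'b) graph \<Rightarrow> 'b list set \<Rightarrow> ('a + 'b) list set" where
  "iota2 J X = (\<Union>x\<in>X. cls J (map Inr x))"

context
  fixes G1 :: "'a graph" and G2 :: "'b graph"
begin

abbreviation "J \<equiv> graph_join G1 G2"

lemma psi1_cls: assumes "x \<in> words J" shows "psi1 G1 (cls J x) = cls G1 (projl x)"
proof -
  have "\<And>y. y \<in> cls J x \<Longrightarrow> cls G1 (projl y) = cls G1 (projl x)"
  proof -
    fix y assume "y \<in> cls J x"
    then have "y \<in> words J" "word_eq J y x" using assms by (auto simp: in_cls_iff intro: word_eq.sym)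
    then show "cls G1 (projl y) = cls G1 (projl x)"
      using assms by (subst cls_eq_iff) (auto simp: words_join_projl word_eq_projl)
  qed
  moreover have "x \<in> cls J x" using assms by (rule self_in_cls)
  ultimately show ?thesis unfolding psi1_def by blast
qed

lemma psi2_cls: assumes "x \<in> words J" shows "psi2 G2 (cls J x) = cls G2 (projr x)"
proof -
  have "\<And>y. y \<in> cls J x \<Longrightarrow> cls G2 (projr y) = cls G2 (projr x)"
  proof -
    fix y assume "y \<in> cls J x"
    then have "y \<in> words J" "word_eq J y x" using assms by (auto simp: in_cls_iff intro: word_eq.sym)
    then show "cls G2 (projr y) = cls G2 (projr x)"
      using assms by (subst cls_eq_iff) (auto simp: words_join_projr word_eq_projr)
  qed
  moreover have "x \<in> cls J x" using assms by (rule self_in_cls)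
  ultimately show ?thesis unfolding psi2_def by blast
qed

lemma iota1_cls: assumes "x \<in> words G1" shows "iota1 J (cls G1 x) = cls J (map Inl x)"
proof -
  have "\<And>y. y \<in> cls G1 x \<Longrightarrow> cls J (map Inl y) = cls J (map Inl x)"
  proof -
    fix y assume "y \<in> cls G1 x"
    then have "y \<in> words G1" "word_eq G1 y x" using assms by (auto simp: in_cls_iff intro: word_eq.sym)
    then show "cls J (map Inl y) = cls J (map Inl x)"
      using assms by (subst cls_eq_iff) (auto simp: words_join_Inl word_eq_Inl)
  qed
  moreover have "x \<in> cls G1 x" using assms by (rule self_in_cls)
  ultimately show ?thesis unfolding iota1_def by blast
qed

lemma iota2_cls: assumes "x \<in> words G2" shows "iota2 J (cls G2 x) = cls J (map Inr x)"
proof -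
  have "\<And>y. y \<in> cls G2 x \<Longrightarrow> cls J (map Inr y) = cls J (map Inr x)"
  proof -
    fix y assume "y \<in> cls G2 x"
    then have "y \<in> words G2" "word_eq G2 y x" using assms by (auto simp: in_cls_iff intro: word_eq.sym)
    then show "cls J (map Inr y) = cls J (map Inr x)"
      using assms by (subst cls_eq_iff) (auto simp: words_join_Inr word_eq_Inr)
  qed
  moreover have "x \<in> cls G2 x" using assms by (rule self_in_cls)
  ultimately show ?thesis unfolding iota2_def by blast
qed

lemma psi1_hom: "psi1 G1 \<in> hom (RACG J) (RACG G1)"
proof (rule homI)
  fix X assume "X \<in> carrier (RACG J)"
  then obtain x where "x \<in> words J" "X = cls J x" by (metis carrier_RACG_E)
  then show "psi1 G1 X \<in> carrier (RACG G1)" by (simp add: psi1_cls cls_in_carrier words_join_projl)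
next
  fix X Y assume "X \<in> carrier (RACG J)" "Y \<in> carrier (RACG J)"
  then obtain x y where "x \<in> words J" "X = cls J x" "y \<in> words J" "Y = cls J y" by (metis carrier_RACG_E)
  then show "psi1 G1 (X \<otimes>\<^bsub>RACG J\<^esub> Y) = psi1 G1 X \<otimes>\<^bsub>RACG G1\<^esub> psi1 G1 Y"
    by (simp add: psi1_cls mult_cls words_join_projl)
qed

lemma psi2_hom: "psi2 G2 \<in> hom (RACG J) (RACG G2)"
proof (rule homI)
  fix X assume "X \<in> carrier (RACG J)"
  then obtain x where "x \<in> words J" "X = cls J x" by (metis carrier_RACG_E)
  then show "psi2 G2 X \<in> carrier (RACG G2)" by (simp add: psi2_cls cls_in_carrier words_join_projr)
next
  fix X Y assume "X \<in> carrier (RACG J)" "Y \<in> carrier (RACG J)"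
  then obtain x y where "x \<in> words J" "X = cls J x" "y \<in> words J" "Y = cls J y" by (metis carrier_RACG_E)
  then show "psi2 G2 (X \<otimes>\<^bsub>RACG J\<^esub> Y) = psi2 G2 X \<otimes>\<^bsub>RACG G2\<^esub> psi2 G2 Y"
    by (simp add: psi2_cls mult_cls words_join_projr)
qed

lemma iota1_hom: "iota1 J \<in> hom (RACG G1) (RACG J)"
proof (rule homI)
  fix X assume "X \<in> carrier (RACG G1)"
  then obtain x where "x \<in> words G1" "X = cls G1 x" by (metis carrier_RACG_E)
  then show "iota1 J X \<in> carrier (RACG J)" by (simp add: iota1_cls cls_in_carrier words_join_Inl)
next
  fix X Y assume "X \<in> carrier (RACG G1)" "Y \<in> carrier (RACG G1)"
  then obtain x y where "x \<in> words G1" "X = cls G1 x" "y \<in> words G1" "Y = cls G1 y" by (metis carrier_RACG_E)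
  then show "iota1 J (X \<otimes>\<^bsub>RACG G1\<^esub> Y) = iota1 J X \<otimes>\<^bsub>RACG J\<^esub> iota1 J Y"
    by (simp add: iota1_cls mult_cls words_join_Inl)
qed

lemma iota2_hom: "iota2 J \<in> hom (RACG G2) (RACG J)"
proof (rule homI)
  fix X assume "X \<in> carrier (RACG G2)"
  then obtain x where "x \<in> words G2" "X = cls G2 x" by (metis carrier_RACG_E)
  then show "iota2 J X \<in> carrier (RACG J)" by (simp add: iota2_cls cls_in_carrier words_join_Inr)
next
  fix X Y assume "X \<in> carrier (RACG G2)" "Y \<in> carrier (RACG G2)"
  then obtain x y where "x \<in> words G2" "X = cls G2 x" "y \<in> words G2" "Y = cls G2 y" by (metis carrier_RACG_E)
  then show "iota2 J (X \<otimes>\<^bsub>RACG G2\<^esub> Y) = iota2 J X \<otimes>\<^bsub>RACG J\<^esub> iota2 J Y"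
    by (simp add: iota2_cls mult_cls words_join_Inr)
qed

lemma psi1_iota1: "X \<in> carrier (RACG G1) \<Longrightarrow> psi1 G1 (iota1 J X) = X"
  by (auto elim!: carrier_RACG_E simp: iota1_cls psi1_cls words_join_Inl)
lemma psi2_iota2: "X \<in> carrier (RACG G2) \<Longrightarrow> psi2 G2 (iota2 J X) = X"
  by (auto elim!: carrier_RACG_E simp: iota2_cls psi2_cls words_join_Inr)
lemma psi1_iota2: "X \<in> carrier (RACG G2) \<Longrightarrow> psi1 G1 (iota2 J X) = \<one>\<^bsub>RACG G1\<^esub>"
  by (auto elim!: carrier_RACG_E simp: iota2_cls psi1_cls words_join_Inr one_RACG)
lemma psi2_iota1: "X \<in> carrier (RACG G1) \<Longrightarrow> psi2 G2 (iota1 J X) = \<one>\<^bsub>RACG G2\<^esub>"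
  by (auto elim!: carrier_RACG_E simp: iota1_cls psi2_cls words_join_Inl one_RACG)

lemma decomp_RACG:
  assumes "X \<in> carrier (RACG J)"
  shows "X = iota1 J (psi1 G1 X) \<otimes>\<^bsub>RACG J\<^esub> iota2 J (psi2 G2 X)"
proof -
  obtain x where x: "x \<in> words J" "X = cls J x" using assms by (metis carrier_RACG_E)
  have w: "projl x \<in> words G1" "projr x \<in> words G2"
    using x by (auto simp: words_join_projl words_join_projr)
  have "iota1 J (psi1 G1 X) \<otimes>\<^bsub>RACG J\<^esub> iota2 J (psi2 G2 X) =
        cls J (map Inl (projl x) @ map Inr (projr x))"
    using x w by (simp add: psi1_cls psi2_cls iota1_cls iota2_cls mult_cls words_join_Inl words_join_Inr)
  also have "\<dots> = cls J x"
    using x w decomp_word[OF x(1)]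
    by (subst cls_eq_iff) (auto simp: words_join_Inl words_join_Inr intro: word_eq.sym)
  finally show ?thesis using x by simp
qed

lemma comm_RACG:
  assumes "X \<in> carrier (RACG G1)" "Y \<in> carrier (RACG G2)"
  shows "iota1 J X \<otimes>\<^bsub>RACG J\<^esub> iota2 J Y = iota2 J Y \<otimes>\<^bsub>RACG J\<^esub> iota1 J X"
proof -
  obtain x y where xy: "x \<in> words G1" "X = cls G1 x" "y \<in> words G2" "Y = cls G2 y"
    using assms by (metis carrier_RACG_E)
  have w: "map Inr y @ map Inl x \<in> words J" "map Inl x @ map Inr y \<in> words J"
    using xy by (auto simp: words_join_Inl words_join_Inr)
  have "word_eq J (map Inr y @ map Inl x) (map Inl x @ map Inr y)"
    using decomp_word[OF w(1)] by simp
  then have "cls J (map Inl x @ map Inr y) = cls J (map Inr y @ map Inl x)"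
    using w by (subst cls_eq_iff) (auto intro: word_eq.sym)
  then show ?thesis using xy
    by (simp add: iota1_cls iota2_cls mult_cls words_join_Inl words_join_Inr)
qed

end

lemma (in group) rcos_eq_iff:
  assumes "subgroup H G" "a \<in> carrier G" "b \<in> carrier G"
  shows "H #> a = H #> b \<longleftrightarrow> a \<otimes> inv b \<in> H"
proof
  assume eq: "H #> a = H #> b"
  have "a \<in> H #> a" by (rule rcos_self[OF assms(2,1)])
  then have "a \<in> H #> b" by (simp add: eq)
  then show "a \<otimes> inv b \<in> H" by (rule subgroup.rcos_module_imp[OF assms(1) is_group assms(3)])
next
  assume "a \<otimes> inv b \<in> H"
  then have "a \<in> H #> b" by (rule subgroup.rcos_module_rev[OF assms(1) is_group assms(3,2)])
  then show "H #> a = H #> b" using repr_independence[OF _ assms(3,1)] by simp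
qed

lemma (in group) in_rcosets_E:
  assumes "C \<in> rcosets H" obtains a where "a \<in> carrier G" "C = H #> a"
  using assms unfolding RCOSETS_def by auto

lemma (in group) rcosets_ne: "subgroup H G \<Longrightarrow> rcosets H \<noteq> {}"
  using rcosetsI[OF subgroup.subset one_closed] by blast

definition enum :: "'x set \<Rightarrow> 'x \<Rightarrow> nat" where
  "enum X = (SOME e. bij_betw e X {0..<card X})"

lemma enum_bij: assumes "finite X" shows "bij_betw (enum X) X {0..<card X}"
proof -
  from ex_bij_betw_finite_nat[OF assms] show ?thesis unfolding enum_def by (rule someI_ex)
qed

definition prodl :: "('g, 'm) monoid_scheme \<Rightarrow> 'g \<Rightarrow> 'g list \<Rightarrow> 'g" where
  "prodl K a w = foldl (\<lambda>x s. x \<otimes>\<^bsub>K\<^esub> s) a w"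

lemma prodl_Cons[simp]: "prodl K a (s # w) = prodl K (a \<otimes>\<^bsub>K\<^esub> s) w"
  by (simp add: prodl_def)
lemma prodl_Nil[simp]: "prodl K a [] = a"
  by (simp add: prodl_def)

lemma (in monoid) prodl_closed: "a \<in> carrier G \<Longrightarrow> set w \<subseteq> carrier G \<Longrightarrow> prodl G a w \<in> carrier G"
  by (induction w arbitrary: a) auto

definition walk :: "(nat \<times> 'x \<Rightarrow> nat) \<Rightarrow> nat \<Rightarrow> 'x list \<Rightarrow> nat" where
  "walk d i w = foldl (\<lambda>i s. d (i, s)) i w"

lemma walk_Cons[simp]: "walk d i (s # w) = walk d (d (i, s)) w"
  by (simp add: walk_def)

definition sub_index :: "('g, 'm) monoid_scheme \<Rightarrow> nat \<Rightarrow> 'g set set" where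
  "sub_index K n = {H. subgroup H K \<and> finite (rcosets\<^bsub>K\<^esub> H) \<and> card (rcosets\<^bsub>K\<^esub> H) = n}"

lemma num_sub_index: "num_subgroups_index K n = card (sub_index K n)"
  by (simp add: num_subgroups_index_def sub_index_def)

definition gen_by :: "('g, 'm) monoid_scheme \<Rightarrow> 'g set \<Rightarrow> bool" where
  "gen_by K S \<longleftrightarrow> S \<subseteq> carrier K \<and> (\<forall>k\<in>carrier K. \<exists>w. set w \<subseteq> S \<and> k = prodl K \<one>\<^bsub>K\<^esub> w)"

lemma (in group) finite_sub_index:
  assumes "gen_by G S" "finite S"
  shows "finite (sub_index G m)"
proof -
  define code where "code H = (let R = rcosets H; e = enum R in
     (e H, restrict (\<lambda>(i, s). e (inv_into R e i #> s)) ({0..<m} \<times> S)))" for H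
  have S: "S \<subseteq> carrier G" using assms by (simp add: gen_by_def)
  have key: "k \<in> H \<longleftrightarrow> walk (snd (code H)) (fst (code H)) w = fst (code H)"
    if H: "H \<in> sub_index G m" and w: "set w \<subseteq> S" and k: "k = prodl G \<one> w" for H w k
  proof -
    define R where "R = rcosets H"
    define e where "e = enum R"
    have sg: "subgroup H G" and fin: "finite R" and cR: "card R = m"
      using H by (auto simp: sub_index_def R_def)
    have bij: "bij_betw e R {0..<m}" using enum_bij[OF fin] cR by (simp add: e_def)
    have codeH: "code H = (e H, restrict (\<lambda>(i, s). e (inv_into R e i #> s)) ({0..<m} \<times> S))"
      by (simp add: code_def R_def e_def Let_def)
    have HR: "H \<in> R"
      using rcosetsI[OF subgroup.subset[OF sg] one_closed] coset_mult_one[OF subgroup.subset[OF sg]]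
      by (simp add: R_def)
    have step: "snd (code H) (e C, s) = e (C #> s)" if "C \<in> R" "s \<in> S" for C s
    proof -
      have "e C \<in> {0..<m}" using bij that by (auto simp: bij_betw_def)
      moreover have "inv_into R e (e C) = C" using bij that by (simp add: bij_betw_def)
      ultimately show ?thesis using that by (simp add: codeH)
    qed
    have walk_eq: "e (H #> prodl G a w) = walk (snd (code H)) (e (H #> a)) w"
      if "a \<in> carrier G" "set w \<subseteq> S" for a w
      using that
    proof (induction w arbitrary: a)
      case Nil then show ?case by (simp add: walk_def)
    next
      case (Cons s w)
      have s: "s \<in> carrier G" "s \<in> S" using Cons.prems S by auto
      have "H #> a \<in> R" using Cons.prems sg subgroup.subset by (auto simp: R_def intro: rcosetsI)
      then have "snd (code H) (e (H #> a), s) = e (H #> (a \<otimes> s))"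
        using step s Cons.prems coset_mult_assoc[OF subgroup.subset[OF sg], of a s] by simp
      then show ?case using Cons s by simp
    qed
    have kc: "k \<in> carrier G" using k w S prodl_closed by auto
    have "k \<in> H \<longleftrightarrow> H #> k = H #> \<one>"
      using rcos_eq_iff[OF sg kc one_closed] kc by simp
    also have "\<dots> \<longleftrightarrow> e (H #> k) = e (H #> \<one>)"
    proof -
      have "H #> k \<in> R" "H #> \<one> \<in> R" using kc sg subgroup.subset by (auto simp: R_def intro: rcosetsI)
      then show ?thesis using bij unfolding bij_betw_def inj_on_def by metis
    qed
    also have "\<dots> \<longleftrightarrow> walk (snd (code H)) (fst (code H)) w = fst (code H)"
      using walk_eq[of \<one> w] w k coset_mult_one[OF subgroup.subset[OF sg]] by (simp add: codeH)
    finally show ?thesis .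
  qed
  have "inj_on code (sub_index G m)"
  proof (rule inj_onI)
    fix H H' assume H: "H \<in> sub_index G m" and H': "H' \<in> sub_index G m" and eq: "code H = code H'"
    have "H \<subseteq> carrier G" "H' \<subseteq> carrier G" using H H' by (auto simp: sub_index_def subgroup.subset)
    moreover have "k \<in> H \<longleftrightarrow> k \<in> H'" if kc: "k \<in> carrier G" for k
    proof -
      obtain w where w: "set w \<subseteq> S" and kw: "k = prodl G \<one> w" using assms(1) kc unfolding gen_by_def by blast
      show ?thesis using key[OF H w kw] key[OF H' w kw] eq by simp
    qed
    ultimately show "H = H'" by blast
  qed
  moreover have "code ` sub_index G m \<subseteq> {0..<m} \<times> (({0..<m} \<times> S) \<rightarrow>\<^sub>E {0..<m})"
  proof
    fix c assume "c \<in> code ` sub_index G m"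
    then obtain H where H: "H \<in> sub_index G m" and c: "c = code H" by auto
    define R where "R = rcosets H"
    define e where "e = enum R"
    have sg: "subgroup H G" and fin: "finite R" and cR: "card R = m"
      using H by (auto simp: sub_index_def R_def)
    have bij: "bij_betw e R {0..<m}" using enum_bij[OF fin] cR by (simp add: e_def)
    have codeH: "code H = (e H, restrict (\<lambda>(i, s). e (inv_into R e i #> s)) ({0..<m} \<times> S))"
      by (simp add: code_def R_def e_def Let_def)
    have HR: "H \<in> R"
      using rcosetsI[OF subgroup.subset[OF sg] one_closed] coset_mult_one[OF subgroup.subset[OF sg]]
      by (simp add: R_def)
    have "e (inv_into R e i #> s) \<in> {0..<m}" if "i \<in> {0..<m}" "s \<in> S" for i s
    proof -
      have "inv_into R e i \<in> R" using bij that by (metis bij_betw_def inv_into_into)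
      then obtain a where a: "a \<in> carrier G" "inv_into R e i = H #> a" unfolding R_def by (rule in_rcosets_E)
      then have "inv_into R e i #> s = H #> (a \<otimes> s)" using that S
        coset_mult_assoc[OF subgroup.subset[OF sg], of a s] by auto
      also have "\<dots> \<in> R" using a that S subgroup.subset[OF sg] unfolding R_def by (intro rcosetsI) auto
      finally show ?thesis using bij by (auto simp: bij_betw_def)
    qed
    moreover have "e H \<in> {0..<m}" using bij HR by (auto simp: bij_betw_def)
    ultimately show "c \<in> {0..<m} \<times> (({0..<m} \<times> S) \<rightarrow>\<^sub>E {0..<m})"
      using c codeH by (auto simp: restrict_PiE_iff)
  qed
  moreover have "finite ({0..<m} \<times> (({0..<m} \<times> S) \<rightarrow>\<^sub>E {0..<m}))"
    using assms by (intro finite_cartesian_product finite_PiE) auto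
  ultimately show ?thesis by (rule inj_on_finite)
qed


lemma img_vimage: "Q \<subseteq> f ` A \<Longrightarrow> f ` (f -` Q \<inter> A) = Q"
  by auto

lemma (in group_hom) preimage_index:
  assumes surj: "h ` carrier G = carrier H" and Q: "subgroup Q H"
  defines "P \<equiv> h -` Q \<inter> carrier G"
  shows "subgroup P G" "bij_betw (\<lambda>C. h ` C) (rcosets\<^bsub>G\<^esub> P) (rcosets\<^bsub>H\<^esub> Q)"
proof -
  have QH: "Q \<subseteq> carrier H" using Q by (rule subgroup.subset)
  show sgP: "subgroup P G"
  proof (rule G.subgroupI)
    show "P \<subseteq> carrier G" by (auto simp: P_def)
    have "\<one> \<in> P" using subgroup.one_closed[OF Q] by (simp add: P_def)
    then show "P \<noteq> {}" by blast
    fix a b assume a: "a \<in> P"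
    then show "inv a \<in> P" using subgroup.m_inv_closed[OF Q] by (auto simp: P_def)
    assume "b \<in> P"
    then show "a \<otimes> b \<in> P" using a subgroup.m_closed[OF Q] by (auto simp: P_def)
  qed
  have PG: "P \<subseteq> carrier G" by (auto simp: P_def)
  have img: "h ` (P #> a) = Q #>\<^bsub>H\<^esub> h a" if a: "a \<in> carrier G" for a
  proof
    show "h ` (P #> a) \<subseteq> Q #>\<^bsub>H\<^esub> h a"
      using a by (auto simp: r_coset_def P_def)
    show "Q #>\<^bsub>H\<^esub> h a \<subseteq> h ` (P #> a)"
    proof
      fix y assume "y \<in> Q #>\<^bsub>H\<^esub> h a"
      then obtain q where q: "q \<in> Q" "y = q \<otimes>\<^bsub>H\<^esub> h a" by (auto simp: r_coset_def)
      have "q \<in> h ` carrier G" using surj QH q(1) by auto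
      then obtain x where x: "x \<in> carrier G" "h x = q" by auto
      then have "x \<otimes> a \<in> P #> a" "h (x \<otimes> a) = y" using q a by (auto simp: r_coset_def P_def)
      then show "y \<in> h ` (P #> a)" by blast
    qed
  qed
  show "bij_betw (\<lambda>C. h ` C) (rcosets\<^bsub>G\<^esub> P) (rcosets\<^bsub>H\<^esub> Q)"
  proof (rule bij_betwI')
    fix C D assume C: "C \<in> rcosets\<^bsub>G\<^esub> P" and D: "D \<in> rcosets\<^bsub>G\<^esub> P"
    obtain a where a: "a \<in> carrier G" "C = P #> a" using C by (rule G.in_rcosets_E)
    obtain b where b: "b \<in> carrier G" "D = P #> b" using D by (rule G.in_rcosets_E)
    show "(h ` C = h ` D) = (C = D)"
    proof
      assume "h ` C = h ` D"
      then have "Q #>\<^bsub>H\<^esub> h a = Q #>\<^bsub>H\<^esub> h b" using img a b by simp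
      then have "h a \<otimes>\<^bsub>H\<^esub> inv\<^bsub>H\<^esub> h b \<in> Q" using H.rcos_eq_iff[OF Q] a b by simp
      then have "a \<otimes> inv b \<in> P" using a b by (simp add: P_def)
      then show "C = D" using G.rcos_eq_iff[OF sgP a(1) b(1)] a b by simp
    qed simp
  next
    fix C assume "C \<in> rcosets\<^bsub>G\<^esub> P"
    then obtain a where a: "a \<in> carrier G" "C = P #> a" by (rule G.in_rcosets_E)
    then show "h ` C \<in> rcosets\<^bsub>H\<^esub> Q" using img[OF a(1)] H.rcosetsI[OF QH, of "h a"] by simp
  next
    fix D assume "D \<in> rcosets\<^bsub>H\<^esub> Q"
    then obtain y where y: "y \<in> carrier H" "D = Q #>\<^bsub>H\<^esub> y" by (rule H.in_rcosets_E)
    have "y \<in> h ` carrier G" using surj y(1) by simp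
    then obtain a where "a \<in> carrier G" "h a = y" by auto
    then have "D = h ` (P #> a)" "P #> a \<in> rcosets\<^bsub>G\<^esub> P" using img y G.rcosetsI[OF PG] by auto
    then show "\<exists>C\<in>rcosets\<^bsub>G\<^esub> P. D = h ` C" by blast
  qed
qed

lemma (in group_hom) card_sub_index_le:
  assumes surj: "h ` carrier G = carrier H" and fin: "finite (sub_index G n)"
  shows "card (sub_index H n) \<le> card (sub_index G n)"
proof (rule card_inj_on_le[OF _ _ fin])
  show "inj_on (\<lambda>Q. h -` Q \<inter> carrier G) (sub_index H n)"
  proof (rule inj_onI)
    fix Q Q' assume "Q \<in> sub_index H n" "Q' \<in> sub_index H n"
    then have "Q \<subseteq> carrier H" "Q' \<subseteq> carrier H" by (auto simp: sub_index_def subgroup.subset)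
    moreover assume "h -` Q \<inter> carrier G = h -` Q' \<inter> carrier G"
    ultimately show "Q = Q'" using img_vimage[of Q h "carrier G"] img_vimage[of Q' h "carrier G"] surj by metis
  qed
  show "(\<lambda>Q. h -` Q \<inter> carrier G) ` sub_index H n \<subseteq> sub_index G n"
  proof
    fix P assume "P \<in> (\<lambda>Q. h -` Q \<inter> carrier G) ` sub_index H n"
    then obtain Q where Q: "Q \<in> sub_index H n" "P = h -` Q \<inter> carrier G" by auto
    then have sg: "subgroup Q H" by (simp add: sub_index_def)
    note pi = preimage_index[OF surj sg]
    have fQ: "finite (rcosets\<^bsub>H\<^esub> Q)" "card (rcosets\<^bsub>H\<^esub> Q) = n" using Q(1) by (auto simp: sub_index_def)
    have "finite (rcosets\<^bsub>G\<^esub> P)" using bij_betw_finite[OF pi(2)] fQ Q(2) by simp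
    moreover have "card (rcosets\<^bsub>G\<^esub> P) = n" using bij_betw_same_card[OF pi(2)] fQ Q(2) by simp
    ultimately show "P \<in> sub_index G n" using pi(1) Q by (simp add: sub_index_def)
  qed
qed

locale dprod = G: group G + K1: group K1 + K2: group K2
  for G :: "('g, 'x) monoid_scheme" (structure) and K1 :: "('a, 'y) monoid_scheme"
    and K2 :: "('b, 'z) monoid_scheme" +
  fixes i1 i2 p1 p2
  assumes i1: "i1 \<in> hom K1 G" and i2: "i2 \<in> hom K2 G"
    and p1: "p1 \<in> hom G K1" and p2: "p2 \<in> hom G K2"
    and p1i1: "x \<in> carrier K1 \<Longrightarrow> p1 (i1 x) = x"
    and p2i2: "y \<in> carrier K2 \<Longrightarrow> p2 (i2 y) = y"
    and p1i2: "y \<in> carrier K2 \<Longrightarrow> p1 (i2 y) = \<one>\<^bsub>K1\<^esub>"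
    and p2i1: "x \<in> carrier K1 \<Longrightarrow> p2 (i1 x) = \<one>\<^bsub>K2\<^esub>"
    and decomp: "g \<in> carrier G \<Longrightarrow> g = i1 (p1 g) \<otimes> i2 (p2 g)"
    and comm: "x \<in> carrier K1 \<Longrightarrow> y \<in> carrier K2 \<Longrightarrow> i1 x \<otimes> i2 y = i2 y \<otimes> i1 x"

sublocale dprod \<subseteq> i1h: group_hom K1 G i1
  by (simp add: group_hom_axioms_def group_hom_def i1 G.group_axioms K1.group_axioms)
sublocale dprod \<subseteq> i2h: group_hom K2 G i2
  by (simp add: group_hom_axioms_def group_hom_def i2 G.group_axioms K2.group_axioms)
sublocale dprod \<subseteq> p1h: group_hom G K1 p1
  by (simp add: group_hom_axioms_def group_hom_def p1 G.group_axioms K1.group_axioms)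
sublocale dprod \<subseteq> p2h: group_hom G K2 p2
  by (simp add: group_hom_axioms_def group_hom_def p2 G.group_axioms K2.group_axioms)

context dprod
begin

definition H1 :: "'g set \<Rightarrow> 'a set" where "H1 H = {x \<in> carrier K1. i1 x \<in> H}"
definition P2 :: "'g set \<Rightarrow> 'b set" where "P2 H = p2 ` H"
definition phi :: "'g set \<Rightarrow> 'b \<Rightarrow> 'a set" where "phi H b = {x \<in> carrier K1. i1 x \<otimes> i2 b \<in> H}"

lemma G_cancel: "a \<in> carrier G \<Longrightarrow> t \<in> carrier G \<Longrightarrow> a \<otimes> (inv a \<otimes> t) = t"
  by (simp add: G.m_assoc[symmetric])

lemma G_sub_mem_iff:
  assumes "subgroup H G" "u \<in> H" "v \<in> carrier G"
  shows "v \<in> H \<longleftrightarrow> v \<otimes> inv u \<in> H"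
proof
  assume "v \<in> H" then show "v \<otimes> inv u \<in> H" using assms by (simp add: subgroup.m_closed subgroup.m_inv_closed)
next
  assume "v \<otimes> inv u \<in> H"
  then have "v \<otimes> inv u \<otimes> u \<in> H" using assms by (simp add: subgroup.m_closed)
  moreover have "v \<otimes> inv u \<otimes> u = v" using assms subgroup.mem_carrier[OF assms(1,2)]
    by (simp add: G.m_assoc)
  ultimately show "v \<in> H" by simp
qed

lemma H1_subgroup: assumes "subgroup H G" shows "subgroup (H1 H) K1"
proof (rule K1.subgroupI)
  show "H1 H \<subseteq> carrier K1" by (auto simp: H1_def)
  have "\<one>\<^bsub>K1\<^esub> \<in> H1 H" using subgroup.one_closed[OF assms] by (simp add: H1_def)
  then show "H1 H \<noteq> {}" by blast
  fix a b assume a: "a \<in> H1 H"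
  then show "inv\<^bsub>K1\<^esub> a \<in> H1 H" using subgroup.m_inv_closed[OF assms] by (simp add: H1_def)
  assume "b \<in> H1 H"
  then show "a \<otimes>\<^bsub>K1\<^esub> b \<in> H1 H" using a subgroup.m_closed[OF assms] by (simp add: H1_def)
qed

lemma P2_subgroup: assumes "subgroup H G" shows "subgroup (P2 H) K2"
  unfolding P2_def by (rule p2h.subgroup_img_is_subgroup[OF assms])

lemma mem_iff_phi:
  assumes "subgroup H G" "g \<in> carrier G"
  shows "g \<in> H \<longleftrightarrow> p2 g \<in> P2 H \<and> p1 g \<in> phi H (p2 g)"
  using decomp[OF assms(2)] assms by (auto simp: P2_def phi_def)

lemma phi_nonempty:
  assumes "subgroup H G" "b \<in> P2 H" shows "\<exists>x. x \<in> phi H b"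
proof -
  obtain g where g: "g \<in> H" "b = p2 g" using assms by (auto simp: P2_def)
  then have "g \<in> carrier G" using subgroup.mem_carrier[OF assms(1)] by blast
  then show ?thesis using mem_iff_phi[OF assms(1)] g by blast
qed

lemma phi_mult:
  assumes "subgroup H G" "x \<in> phi H b" "x' \<in> phi H b'" "b \<in> carrier K2" "b' \<in> carrier K2"
  shows "x \<otimes>\<^bsub>K1\<^esub> x' \<in> phi H (b \<otimes>\<^bsub>K2\<^esub> b')"
proof -
  have x: "x \<in> carrier K1" "x' \<in> carrier K1" using assms by (auto simp: phi_def)
  have "(i1 x \<otimes> i2 b) \<otimes> (i1 x' \<otimes> i2 b') \<in> H"
    using assms by (auto simp: phi_def intro: subgroup.m_closed)
  moreover have "(i1 x \<otimes> i2 b) \<otimes> (i1 x' \<otimes> i2 b') = i1 (x \<otimes>\<^bsub>K1\<^esub> x') \<otimes> i2 (b \<otimes>\<^bsub>K2\<^esub> b')"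
  proof -
    have "(i1 x \<otimes> i2 b) \<otimes> (i1 x' \<otimes> i2 b') = i1 x \<otimes> (i2 b \<otimes> i1 x') \<otimes> i2 b'"
      using x assms by (simp add: G.m_assoc)
    also have "\<dots> = i1 x \<otimes> (i1 x' \<otimes> i2 b) \<otimes> i2 b'" using comm[OF x(2) assms(4)] by simp
    also have "\<dots> = i1 (x \<otimes>\<^bsub>K1\<^esub> x') \<otimes> i2 (b \<otimes>\<^bsub>K2\<^esub> b')"
      using x assms by (simp add: G.m_assoc)
    finally show ?thesis .
  qed
  ultimately show ?thesis using x by (simp add: phi_def)
qed

lemma phi_coset:
  assumes "subgroup H G" "z \<in> phi H c" "c \<in> carrier K2"
  shows "phi H c = H1 H #>\<^bsub>K1\<^esub> z"
proof -
  have z: "z \<in> carrier K1" "i1 z \<otimes> i2 c \<in> H" using assms by (auto simp: phi_def)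
  have "y \<in> phi H c \<longleftrightarrow> y \<in> H1 H #>\<^bsub>K1\<^esub> z" if y: "y \<in> carrier K1" for y
  proof -
    have "y \<in> phi H c \<longleftrightarrow> i1 y \<otimes> i2 c \<in> H" using y by (simp add: phi_def)
    also have "\<dots> \<longleftrightarrow> (i1 y \<otimes> i2 c) \<otimes> inv (i1 z \<otimes> i2 c) \<in> H"
      using G_sub_mem_iff[OF assms(1) z(2)] y assms by simp
    also have "(i1 y \<otimes> i2 c) \<otimes> inv (i1 z \<otimes> i2 c) = i1 (y \<otimes>\<^bsub>K1\<^esub> inv\<^bsub>K1\<^esub> z)"
      using y z assms by (simp add: G.inv_mult_group G.m_assoc G_cancel)
    also have "i1 (y \<otimes>\<^bsub>K1\<^esub> inv\<^bsub>K1\<^esub> z) \<in> H \<longleftrightarrow> y \<otimes>\<^bsub>K1\<^esub> inv\<^bsub>K1\<^esub> z \<in> H1 H"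
      using y z by (simp add: H1_def)
    also have "\<dots> \<longleftrightarrow> y \<in> H1 H #>\<^bsub>K1\<^esub> z"
      using subgroup.rcos_module[OF H1_subgroup[OF assms(1)] K1.is_group z(1) y] by simp
    finally show ?thesis .
  qed
  moreover have "phi H c \<subseteq> carrier K1" by (auto simp: phi_def)
  moreover have "H1 H #>\<^bsub>K1\<^esub> z \<subseteq> carrier K1"
    using K1.r_coset_subset_G[OF subgroup.subset[OF H1_subgroup[OF assms(1)]] z(1)] .
  ultimately show ?thesis by blast
qed

lemma phi_in_rcosets:
  assumes "subgroup H G" "b \<in> P2 H"
  shows "phi H b \<in> rcosets\<^bsub>K1\<^esub> (H1 H)"
proof -
  obtain z where z: "z \<in> phi H b" using phi_nonempty[OF assms] by blast
  have b: "b \<in> carrier K2" using assms subgroup.mem_carrier[OF P2_subgroup[OF assms(1)]] by blast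
  have "z \<in> carrier K1" using z by (simp add: phi_def)
  then show ?thesis using phi_coset[OF assms(1) z b]
    K1.rcosetsI[OF subgroup.subset[OF H1_subgroup[OF assms(1)]]] by simp
qed

lemma phi_transfer:
  assumes H: "subgroup H G" and H': "subgroup H' G"
    and eq1: "H1 H = H1 H'" and eq2: "P2 H = P2 H'"
    and b: "b \<in> P2 H" and b': "b' \<in> P2 H"
    and e: "phi H b = phi H' b" and e': "phi H b' = phi H' b'"
  shows "phi H (b \<otimes>\<^bsub>K2\<^esub> b') = phi H' (b \<otimes>\<^bsub>K2\<^esub> b')"
proof -
  have bc: "b \<in> carrier K2" "b' \<in> carrier K2"
    using b b' subgroup.mem_carrier[OF P2_subgroup[OF H]] by auto
  obtain x where x: "x \<in> phi H b" using phi_nonempty[OF H b] by blast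
  obtain x' where x': "x' \<in> phi H b'" using phi_nonempty[OF H b'] by blast
  have 1: "x \<otimes>\<^bsub>K1\<^esub> x' \<in> phi H (b \<otimes>\<^bsub>K2\<^esub> b')" by (rule phi_mult[OF H x x' bc])
  have 2: "x \<otimes>\<^bsub>K1\<^esub> x' \<in> phi H' (b \<otimes>\<^bsub>K2\<^esub> b')" using x x' e e' by (intro phi_mult[OF H' _ _ bc]) auto
  have bb: "b \<otimes>\<^bsub>K2\<^esub> b' \<in> carrier K2" using bc by simp
  show ?thesis using phi_coset[OF H 1 bb] phi_coset[OF H' 2 bb] eq1 by simp
qed


lemma (in group) rcosets_rep:
  assumes "subgroup L G" "C \<in> rcosets L"
  shows "(SOME x. x \<in> C) \<in> C" "(SOME x. x \<in> C) \<in> carrier G" "C = L #> (SOME x. x \<in> C)"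
proof -
  obtain a where a: "a \<in> carrier G" "C = L #> a" using assms(2) by (rule in_rcosets_E)
  have "a \<in> C" using a rcos_self[OF a(1) assms(1)] by simp
  then show r: "(SOME x. x \<in> C) \<in> C" by (rule someI)
  then show "(SOME x. x \<in> C) \<in> carrier G"
    using a subgroup.elemrcos_carrier[OF assms(1) is_group a(1)] by simp
  show "C = L #> (SOME x. x \<in> C)" using repr_independence[OF _ a(1) assms(1)] r a by simp
qed

lemma index_bound:
  assumes H: "subgroup H G" and fin: "finite (rcosets H)"
  shows "finite (rcosets\<^bsub>K1\<^esub> (H1 H))" "finite (rcosets\<^bsub>K2\<^esub> (P2 H))"
    "card (rcosets\<^bsub>K1\<^esub> (H1 H)) * card (rcosets\<^bsub>K2\<^esub> (P2 H)) \<le> card (rcosets H)"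
proof -
  define R1 where "R1 = rcosets\<^bsub>K1\<^esub> (H1 H)"
  define R2 where "R2 = rcosets\<^bsub>K2\<^esub> (P2 H)"
  define r1 where "r1 C = (SOME x. x \<in> C)" for C :: "'a set"
  define r2 where "r2 C = (SOME x. x \<in> C)" for C :: "'b set"
  note s1 = H1_subgroup[OF H] and s2 = P2_subgroup[OF H]
  note rep1 = K1.rcosets_rep[OF s1, folded R1_def r1_def]
  note rep2 = K2.rcosets_rep[OF s2, folded R2_def r2_def]
  define f where "f = (\<lambda>(C1, C2). H #> (i1 (r1 C1) \<otimes> i2 (r2 C2)))"
  have HG: "H \<subseteq> carrier G" using H by (rule subgroup.subset)
  have inj: "inj_on f (R1 \<times> R2)"
  proof (rule inj_onI, clarify)
    fix C1 C2 C1' C2' assume C: "C1 \<in> R1" "C2 \<in> R2" "C1' \<in> R1" "C2' \<in> R2"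
      and eq: "f (C1, C2) = f (C1', C2')"
    define x where "x = r1 C1" define y where "y = r2 C2"
    define x' where "x' = r1 C1'" define y' where "y' = r2 C2'"
    have c: "x \<in> carrier K1" "x' \<in> carrier K1" "y \<in> carrier K2" "y' \<in> carrier K2"
      using rep1(2) rep2(2) C by (auto simp: x_def x'_def y_def y'_def)
    have "H #> (i1 x \<otimes> i2 y) = H #> (i1 x' \<otimes> i2 y')" using eq by (simp add: f_def x_def y_def x'_def y'_def)
    then have g: "(i1 x \<otimes> i2 y) \<otimes> inv (i1 x' \<otimes> i2 y') \<in> H"
      using G.rcos_eq_iff[OF H] c by simp
    have "p2 ((i1 x \<otimes> i2 y) \<otimes> inv (i1 x' \<otimes> i2 y')) = y \<otimes>\<^bsub>K2\<^esub> inv\<^bsub>K2\<^esub> y'"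
      using c by (simp add: p2i1 p2i2)
    then have "y \<otimes>\<^bsub>K2\<^esub> inv\<^bsub>K2\<^esub> y' \<in> P2 H" using g unfolding P2_def by (metis image_eqI)
    then have "P2 H #>\<^bsub>K2\<^esub> y = P2 H #>\<^bsub>K2\<^esub> y'" using K2.rcos_eq_iff[OF s2] c by simp
    then have C2: "C2 = C2'" using rep2(3) C by (metis y_def y'_def)
    then have yy: "y' = y" by (simp add: y_def y'_def)
    have "(i1 x \<otimes> i2 y) \<otimes> inv (i1 x' \<otimes> i2 y') = i1 (x \<otimes>\<^bsub>K1\<^esub> inv\<^bsub>K1\<^esub> x')"
      using c yy by (simp add: G.inv_mult_group G.m_assoc G_cancel)
    then have "x \<otimes>\<^bsub>K1\<^esub> inv\<^bsub>K1\<^esub> x' \<in> H1 H" using g c by (simp add: H1_def)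
    then have "H1 H #>\<^bsub>K1\<^esub> x = H1 H #>\<^bsub>K1\<^esub> x'" using K1.rcos_eq_iff[OF s1] c by simp
    then have "C1 = C1'" using rep1(3) C by (metis x_def x'_def)
    then show "C1 = C1' \<and> C2 = C2'" using C2 by simp
  qed
  have img: "f ` (R1 \<times> R2) \<subseteq> rcosets H"
  proof clarify
    fix C1 C2 assume "C1 \<in> R1" "C2 \<in> R2"
    then have "i1 (r1 C1) \<otimes> i2 (r2 C2) \<in> carrier G" using rep1(2) rep2(2) by simp
    then show "f (C1, C2) \<in> rcosets H" using G.rcosetsI[OF HG] by (simp add: f_def)
  qed
  have finR: "finite (R1 \<times> R2)" using inj img fin by (rule inj_on_finite)
  have ne: "R1 \<noteq> {}" "R2 \<noteq> {}" using K1.rcosets_ne[OF s1] K2.rcosets_ne[OF s2] by (auto simp: R1_def R2_def)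
  show "finite (rcosets\<^bsub>K1\<^esub> (H1 H))" using finite_cartesian_productD1[OF finR ne(2)] by (simp add: R1_def)
  show "finite (rcosets\<^bsub>K2\<^esub> (P2 H))" using finite_cartesian_productD2[OF finR ne(1)] by (simp add: R2_def)
  show "card (rcosets\<^bsub>K1\<^esub> (H1 H)) * card (rcosets\<^bsub>K2\<^esub> (P2 H)) \<le> card (rcosets H)"
    using card_inj_on_le[OF inj img fin] by (simp add: R1_def R2_def card_cartesian_product)
qed


definition rep :: "'b set \<Rightarrow> 'b set \<Rightarrow> 'b" where
  "rep Q C = (if C = Q then \<one>\<^bsub>K2\<^esub> else (SOME x. x \<in> C))"

definition uu :: "'b set \<Rightarrow> 'b \<Rightarrow> 'b \<Rightarrow> 'b" where
  "uu Q t s = t \<otimes>\<^bsub>K2\<^esub> s \<otimes>\<^bsub>K2\<^esub> inv\<^bsub>K2\<^esub> (rep Q (Q #>\<^bsub>K2\<^esub> (t \<otimes>\<^bsub>K2\<^esub> s)))"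

definition code :: "'b set \<Rightarrow> 'g set \<Rightarrow> 'a set \<times> 'b set \<times> (nat \<times> 'b \<Rightarrow> nat)" where
  "code S H = (let Q = P2 H; R1 = rcosets\<^bsub>K1\<^esub> (H1 H); R2 = rcosets\<^bsub>K2\<^esub> Q in
     (H1 H, Q, restrict (\<lambda>(i, s). enum R1 (phi H (uu Q (rep Q (inv_into R2 (enum R2) i)) s)))
        ({0..<card R2} \<times> S)))"

lemma rep_props:
  assumes "subgroup Q K2" "C \<in> rcosets\<^bsub>K2\<^esub> Q"
  shows "rep Q C \<in> C" "rep Q C \<in> carrier K2" "C = Q #>\<^bsub>K2\<^esub> rep Q C"
proof -
  have QK: "Q \<subseteq> carrier K2" using assms(1) by (rule subgroup.subset)
  have "rep Q C \<in> C \<and> rep Q C \<in> carrier K2 \<and> C = Q #>\<^bsub>K2\<^esub> rep Q C"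
  proof (cases "C = Q")
    case True
    then show ?thesis using subgroup.one_closed[OF assms(1)] K2.coset_mult_one[OF QK] by (simp add: rep_def)
  next
    case False
    then show ?thesis using K2.rcosets_rep[OF assms] by (simp add: rep_def)
  qed
  then show "rep Q C \<in> C" "rep Q C \<in> carrier K2" "C = Q #>\<^bsub>K2\<^esub> rep Q C" by auto
qed

lemma phi_one: "phi H \<one>\<^bsub>K2\<^esub> = H1 H"
  by (auto simp: phi_def H1_def)

lemma rep_Q: "rep Q Q = \<one>\<^bsub>K2\<^esub>" by (simp add: rep_def)

lemma uu_in_Q:
  assumes Q: "subgroup Q K2" and t: "t \<in> carrier K2" and s: "s \<in> carrier K2"
  shows "uu Q t s \<in> Q"
proof -
  have QK: "Q \<subseteq> carrier K2" using Q by (rule subgroup.subset)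
  have ts: "t \<otimes>\<^bsub>K2\<^esub> s \<in> carrier K2" using t s by simp
  have C: "Q #>\<^bsub>K2\<^esub> (t \<otimes>\<^bsub>K2\<^esub> s) \<in> rcosets\<^bsub>K2\<^esub> Q" using K2.rcosetsI[OF QK ts] .
  note rp = rep_props[OF Q C]
  have "Q #>\<^bsub>K2\<^esub> (t \<otimes>\<^bsub>K2\<^esub> s) = Q #>\<^bsub>K2\<^esub> rep Q (Q #>\<^bsub>K2\<^esub> (t \<otimes>\<^bsub>K2\<^esub> s))" using rp(3) .
  then show ?thesis using K2.rcos_eq_iff[OF Q ts rp(2)] by (simp add: uu_def)
qed

lemma K2_cancel: "a \<in> carrier K2 \<Longrightarrow> x \<in> carrier K2 \<Longrightarrow> inv\<^bsub>K2\<^esub> a \<otimes>\<^bsub>K2\<^esub> (a \<otimes>\<^bsub>K2\<^esub> x) = x"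
  by (simp add: K2.m_assoc[symmetric])

lemma code_inj:
  assumes S: "gen_by K2 S"
    and H: "subgroup H G" "finite (rcosets H)" and H': "subgroup H' G" "finite (rcosets H')"
    and eq: "code S H = code S H'"
  shows "H = H'"
proof -
  define Q where "Q = P2 H"
  define L where "L = H1 H"
  define R1 where "R1 = rcosets\<^bsub>K1\<^esub> L"
  define R2 where "R2 = rcosets\<^bsub>K2\<^esub> Q"
  define e1 where "e1 = enum R1"
  define e2 where "e2 = enum R2"
  have SK: "S \<subseteq> carrier K2" using S by (simp add: gen_by_def)
  have eqQ: "P2 H' = Q" and eqL: "H1 H' = L" using eq by (auto simp: code_def Let_def Q_def L_def)
  have sQ: "subgroup Q K2" using P2_subgroup[OF H(1)] by (simp add: Q_def)
  have QK: "Q \<subseteq> carrier K2" using sQ by (rule subgroup.subset)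
  have finR1: "finite R1" using index_bound(1)[OF H] by (simp add: R1_def L_def)
  have finR2: "finite R2" using index_bound(2)[OF H] by (simp add: R2_def Q_def)
  have bij1: "bij_betw e1 R1 {0..<card R1}" using enum_bij[OF finR1] by (simp add: e1_def)
  have bij2: "bij_betw e2 R2 {0..<card R2}" using enum_bij[OF finR2] by (simp add: e2_def)
  have fun_eq: "restrict (\<lambda>(i, s). e1 (phi H (uu Q (rep Q (inv_into R2 e2 i)) s))) ({0..<card R2} \<times> S)
      = restrict (\<lambda>(i, s). e1 (phi H' (uu Q (rep Q (inv_into R2 e2 i)) s))) ({0..<card R2} \<times> S)"
    using eq by (simp add: code_def Let_def Q_def L_def R1_def R2_def e1_def e2_def eqQ eqL)
  have U: "phi H (uu Q (rep Q C) s) = phi H' (uu Q (rep Q C) s)" if C: "C \<in> R2" and s: "s \<in> S" for C s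
  proof -
    have i: "e2 C \<in> {0..<card R2}" "inv_into R2 e2 (e2 C) = C" using bij2 C by (auto simp: bij_betw_def)
    have "e1 (phi H (uu Q (rep Q C) s)) = e1 (phi H' (uu Q (rep Q C) s))"
      using fun_cong[OF fun_eq, of "(e2 C, s)"] i s by simp
    moreover have uQ: "uu Q (rep Q C) s \<in> Q"
      using uu_in_Q[OF sQ rep_props(2)[OF sQ C[unfolded R2_def]]] s SK by auto
    then have "phi H (uu Q (rep Q C) s) \<in> R1" "phi H' (uu Q (rep Q C) s) \<in> R1"
      using phi_in_rcosets[OF H(1)] phi_in_rcosets[OF H'(1)] eqQ eqL by (auto simp: R1_def L_def Q_def)
    ultimately show ?thesis using bij1 by (auto simp: bij_betw_def inj_on_def)
  qed
  define good where "good c \<longleftrightarrow> c \<otimes>\<^bsub>K2\<^esub> inv\<^bsub>K2\<^esub> (rep Q (Q #>\<^bsub>K2\<^esub> c)) \<in> Q \<and>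
      phi H (c \<otimes>\<^bsub>K2\<^esub> inv\<^bsub>K2\<^esub> (rep Q (Q #>\<^bsub>K2\<^esub> c))) = phi H' (c \<otimes>\<^bsub>K2\<^esub> inv\<^bsub>K2\<^esub> (rep Q (Q #>\<^bsub>K2\<^esub> c)))" for c
  have step: "good (prodl K2 c w)" if "c \<in> carrier K2" "good c" "set w \<subseteq> S" for c w
    using that
  proof (induction w arbitrary: c)
    case Nil then show ?case by simp
  next
    case (Cons s w)
    have s: "s \<in> carrier K2" "s \<in> S" using Cons.prems SK by auto
    have c: "c \<in> carrier K2" by fact
    define t where "t = rep Q (Q #>\<^bsub>K2\<^esub> c)"
    define t' where "t' = rep Q (Q #>\<^bsub>K2\<^esub> (c \<otimes>\<^bsub>K2\<^esub> s))"
    have Cc: "Q #>\<^bsub>K2\<^esub> c \<in> R2" using K2.rcosetsI[OF QK c] by (simp add: R2_def)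
    have cs: "c \<otimes>\<^bsub>K2\<^esub> s \<in> carrier K2" using c s by simp
    have Ccs: "Q #>\<^bsub>K2\<^esub> (c \<otimes>\<^bsub>K2\<^esub> s) \<in> R2" using K2.rcosetsI[OF QK cs] by (simp add: R2_def)
    have t: "t \<in> carrier K2" "Q #>\<^bsub>K2\<^esub> c = Q #>\<^bsub>K2\<^esub> t"
      using rep_props[OF sQ Cc[unfolded R2_def]] by (auto simp: t_def)
    have t': "t' \<in> carrier K2" using rep_props[OF sQ Ccs[unfolded R2_def]] by (auto simp: t'_def)
    have "Q #>\<^bsub>K2\<^esub> (t \<otimes>\<^bsub>K2\<^esub> s) = (Q #>\<^bsub>K2\<^esub> t) #>\<^bsub>K2\<^esub> s"
      using K2.coset_mult_assoc[OF QK t(1) s(1)] by simp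
    also have "\<dots> = Q #>\<^bsub>K2\<^esub> (c \<otimes>\<^bsub>K2\<^esub> s)"
      using K2.coset_mult_assoc[OF QK c s(1)] t(2) by simp
    finally have uu_eq: "uu Q t s = t \<otimes>\<^bsub>K2\<^esub> s \<otimes>\<^bsub>K2\<^esub> inv\<^bsub>K2\<^esub> t'"
      by (simp add: uu_def t'_def)
    have alg: "(c \<otimes>\<^bsub>K2\<^esub> s) \<otimes>\<^bsub>K2\<^esub> inv\<^bsub>K2\<^esub> t' =
        (c \<otimes>\<^bsub>K2\<^esub> inv\<^bsub>K2\<^esub> t) \<otimes>\<^bsub>K2\<^esub> uu Q t s"
      using c s t t' by (simp add: uu_eq K2.m_assoc K2_cancel)
    have g: "c \<otimes>\<^bsub>K2\<^esub> inv\<^bsub>K2\<^esub> t \<in> Q"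
      "phi H (c \<otimes>\<^bsub>K2\<^esub> inv\<^bsub>K2\<^esub> t) = phi H' (c \<otimes>\<^bsub>K2\<^esub> inv\<^bsub>K2\<^esub> t)"
      using Cons.prems(2) by (auto simp: good_def t_def)
    have uQ: "uu Q t s \<in> Q" using uu_in_Q[OF sQ t(1) s(1)] .
    have Ut: "phi H (uu Q t s) = phi H' (uu Q t s)" using U[OF Cc s(2)] by (simp add: t_def)
    have g1': "c \<otimes>\<^bsub>K2\<^esub> inv\<^bsub>K2\<^esub> t \<in> P2 H" using g(1) by (simp only: Q_def)
    have uQ': "uu Q t s \<in> P2 H" using uQ by (simp only: Q_def)
    have eL: "H1 H = H1 H'" using eqL by (simp add: L_def)
    have eQ: "P2 H = P2 H'" using eqQ by (simp add: Q_def)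
    have "good (c \<otimes>\<^bsub>K2\<^esub> s)"
      unfolding good_def t'_def[symmetric] alg
      using subgroup.m_closed[OF sQ g(1) uQ]
        phi_transfer[OF H(1) H'(1) eL eQ g1' uQ' g(2) Ut]
      by simp
    then show ?case using Cons.IH[OF cs] Cons.prems by simp
  qed
  have good1: "good \<one>\<^bsub>K2\<^esub>"
  proof -
    have "Q #>\<^bsub>K2\<^esub> \<one>\<^bsub>K2\<^esub> = Q" using K2.coset_mult_one[OF QK] .
    moreover have "phi H \<one>\<^bsub>K2\<^esub> = L" "phi H' \<one>\<^bsub>K2\<^esub> = L"
      using eqL phi_one[of H] phi_one[of H'] by (simp_all add: L_def)
    ultimately show ?thesis using subgroup.one_closed[OF sQ] by (simp add: good_def rep_Q)
  qed
  have phi_eq: "phi H b = phi H' b" if b: "b \<in> Q" for b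
  proof -
    have bc: "b \<in> carrier K2" using b QK by auto
    obtain w where w: "set w \<subseteq> S" "b = prodl K2 \<one>\<^bsub>K2\<^esub> w" using S bc unfolding gen_by_def by blast
    have "good b" using step[OF K2.one_closed good1 w(1)] w(2) by simp
    moreover have "Q #>\<^bsub>K2\<^esub> b = Q" using K2.coset_join2[OF bc sQ b] .
    ultimately show ?thesis using bc by (simp add: good_def rep_Q)
  qed
  have "g \<in> H \<longleftrightarrow> g \<in> H'" if g: "g \<in> carrier G" for g
  proof -
    have 1: "g \<in> H \<longleftrightarrow> p2 g \<in> Q \<and> p1 g \<in> phi H (p2 g)" using mem_iff_phi[OF H(1) g] by (simp add: Q_def)
    have 2: "g \<in> H' \<longleftrightarrow> p2 g \<in> Q \<and> p1 g \<in> phi H' (p2 g)" using mem_iff_phi[OF H'(1) g] eqQ by simp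
    show ?thesis
    proof (cases "p2 g \<in> Q")
      case True
      then show ?thesis using 1 2 phi_eq[OF True] by simp
    next
      case False
      then show ?thesis using 1 2 by simp
    qed
  qed
  moreover have "H \<subseteq> carrier G" "H' \<subseteq> carrier G" using H(1) H'(1) by (auto simp: subgroup.subset)
  ultimately show ?thesis by blast
qed


lemma code_mem:
  assumes S: "gen_by K2 S" and H: "H \<in> sub_index G n"
  shows "code S H \<in> (\<Union>m\<in>{1..n}. \<Union>a\<in>{a\<in>{1..n}. m * a \<le> n}.
            sub_index K1 m \<times> sub_index K2 a \<times> (({0..<a} \<times> S) \<rightarrow>\<^sub>E {0..<m}))"
proof -
  have sH: "subgroup H G" and fH: "finite (rcosets H)" and cH: "card (rcosets H) = n"
    using H by (auto simp: sub_index_def)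
  define Q where "Q = P2 H"
  define L where "L = H1 H"
  define R1 where "R1 = rcosets\<^bsub>K1\<^esub> L"
  define R2 where "R2 = rcosets\<^bsub>K2\<^esub> Q"
  define m where "m = card R1"
  define a where "a = card R2"
  have SK: "S \<subseteq> carrier K2" using S by (simp add: gen_by_def)
  have sQ: "subgroup Q K2" using P2_subgroup[OF sH] by (simp add: Q_def)
  have sL: "subgroup L K1" using H1_subgroup[OF sH] by (simp add: L_def)
  have finR1: "finite R1" using index_bound(1)[OF sH fH] by (simp add: R1_def L_def)
  have finR2: "finite R2" using index_bound(2)[OF sH fH] by (simp add: R2_def Q_def)
  have ma: "m * a \<le> n" using index_bound(3)[OF sH fH] cH by (simp add: m_def a_def R1_def R2_def L_def Q_def)
  have m1: "1 \<le> m" using finR1 K1.rcosets_ne[OF sL] by (simp add: m_def R1_def Suc_le_eq card_gt_0_iff)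
  have a1: "1 \<le> a" using finR2 K2.rcosets_ne[OF sQ] by (simp add: a_def R2_def Suc_le_eq card_gt_0_iff)
  have "m * 1 \<le> m * a" using a1 by (rule mult_le_mono2)
  then have mn: "m \<le> n" using ma by (simp only: nat_mult_1_right)
  have "1 * a \<le> m * a" using m1 by (rule mult_le_mono1)
  then have an: "a \<le> n" using ma by (simp only: nat_mult_1)
  have bij1: "bij_betw (enum R1) R1 {0..<m}" using enum_bij[OF finR1] by (simp add: m_def)
  have bij2: "bij_betw (enum R2) R2 {0..<a}" using enum_bij[OF finR2] by (simp add: a_def)
  have L1: "L \<in> sub_index K1 m" using sL finR1 by (simp add: sub_index_def m_def R1_def)
  have Q1: "Q \<in> sub_index K2 a" using sQ finR2 by (simp add: sub_index_def a_def R2_def)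
  have val: "enum R1 (phi H (uu Q (rep Q (inv_into R2 (enum R2) i)) s)) \<in> {0..<m}"
    if i: "i \<in> {0..<a}" and s: "s \<in> S" for i s
  proof -
    have C: "inv_into R2 (enum R2) i \<in> R2" using bij2 i by (metis bij_betw_def inv_into_into)
    have "uu Q (rep Q (inv_into R2 (enum R2) i)) s \<in> Q"
      using uu_in_Q[OF sQ rep_props(2)[OF sQ C[unfolded R2_def]]] s SK unfolding R2_def by auto
    then have "phi H (uu Q (rep Q (inv_into R2 (enum R2) i)) s) \<in> R1"
      using phi_in_rcosets[OF sH] by (simp add: R1_def L_def Q_def)
    then show ?thesis using bij1 by (auto simp: bij_betw_def)
  qed
  have "code S H = (L, Q, restrict (\<lambda>(i, s). enum R1 (phi H (uu Q (rep Q (inv_into R2 (enum R2) i)) s)))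
        ({0..<a} \<times> S))"
    by (simp add: code_def Let_def Q_def L_def R1_def R2_def a_def)
  moreover have "restrict (\<lambda>(i, s). enum R1 (phi H (uu Q (rep Q (inv_into R2 (enum R2) i)) s)))
        ({0..<a} \<times> S) \<in> ({0..<a} \<times> S) \<rightarrow>\<^sub>E {0..<m}"
    using val by (auto simp: restrict_PiE_iff)
  ultimately have X: "code S H \<in> sub_index K1 m \<times> sub_index K2 a \<times> (({0..<a} \<times> S) \<rightarrow>\<^sub>E {0..<m})"
    using L1 Q1 by simp
  have mi: "m \<in> {1..n}" using m1 mn by simp
  have ai: "a \<in> {a\<in>{1..n}. m * a \<le> n}" using a1 an ma by simp
  have Y: "code S H \<in> (\<Union>a\<in>{a\<in>{1..n}. m * a \<le> n}.
            sub_index K1 m \<times> sub_index K2 a \<times> (({0..<a} \<times> S) \<rightarrow>\<^sub>E {0..<m}))"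
    using ai X by (rule UN_I[where B="\<lambda>a. sub_index K1 m \<times> sub_index K2 a \<times> (({0..<a} \<times> S) \<rightarrow>\<^sub>E {0..<m})"])
  show ?thesis using mi Y by (rule UN_I[where B="\<lambda>m. \<Union>a\<in>{a\<in>{1..n}. m * a \<le> n}.
            sub_index K1 m \<times> sub_index K2 a \<times> (({0..<a} \<times> S) \<rightarrow>\<^sub>E {0..<m})"])
qed

theorem upper_count:
  assumes S: "gen_by K2 S" "finite S"
    and f1: "\<And>m. finite (sub_index K1 m)" and f2: "\<And>a. finite (sub_index K2 a)"
  shows "finite (sub_index G n)"
    "card (sub_index G n) \<le> (\<Sum>m\<in>{1..n}. \<Sum>a\<in>{a\<in>{1..n}. m * a \<le> n}.
        card (sub_index K1 m) * card (sub_index K2 a) * m ^ (a * card S))"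
proof -
  define T where "T = (\<Union>m\<in>{1..n}. \<Union>a\<in>{a\<in>{1..n}. m * a \<le> n}.
            sub_index K1 m \<times> sub_index K2 a \<times> (({0..<a} \<times> S) \<rightarrow>\<^sub>E {0..<m}))"
  have inj: "inj_on (code S) (sub_index G n)"
    by (rule inj_onI) (rule code_inj[OF S(1)], auto simp: sub_index_def)
  have img: "code S ` sub_index G n \<subseteq> T" using code_mem[OF S(1)] by (auto simp: T_def)
  have finT: "finite T" unfolding T_def
    using f1 f2 S(2) by (intro finite_UN_I finite_cartesian_product finite_PiE) auto
  show "finite (sub_index G n)" using inj img finT by (rule inj_on_finite)
  have "card (sub_index G n) \<le> card T" using inj img finT by (rule card_inj_on_le)
  also have "card T \<le> (\<Sum>m\<in>{1..n}. card (\<Union>a\<in>{a\<in>{1..n}. m * a \<le> n}.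
            sub_index K1 m \<times> sub_index K2 a \<times> (({0..<a} \<times> S) \<rightarrow>\<^sub>E {0..<m})))"
    unfolding T_def by (rule card_UN_le) simp
  also have "\<dots> \<le> (\<Sum>m\<in>{1..n}. \<Sum>a\<in>{a\<in>{1..n}. m * a \<le> n}.
         card (sub_index K1 m \<times> sub_index K2 a \<times> (({0..<a} \<times> S) \<rightarrow>\<^sub>E {0..<m})))"
    by (intro sum_mono card_UN_le) simp
  also have "\<dots> = (\<Sum>m\<in>{1..n}. \<Sum>a\<in>{a\<in>{1..n}. m * a \<le> n}.
        card (sub_index K1 m) * card (sub_index K2 a) * m ^ (a * card S))"
  proof -
    have ce: "card (sub_index K1 m \<times> sub_index K2 a \<times> (({0..<a} \<times> S) \<rightarrow>\<^sub>E {0..<m})) =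
        card (sub_index K1 m) * card (sub_index K2 a) * m ^ (a * card S)" for m a
    proof -
      have "card (({0..<a} \<times> S) \<rightarrow>\<^sub>E {0..<m}) = m ^ (a * card S)"
        using S(2) by (simp add: card_PiE card_cartesian_product)
      then show ?thesis by (simp add: card_cartesian_product)
    qed
    show ?thesis by (simp only: ce)
  qed
  finally show "card (sub_index G n) \<le> (\<Sum>m\<in>{1..n}. \<Sum>a\<in>{a\<in>{1..n}. m * a \<le> n}.
        card (sub_index K1 m) * card (sub_index K2 a) * m ^ (a * card S))" .
qed

end

lemma dprod_RACG:
  "dprod (RACG (graph_join G1 G2)) (RACG G1) (RACG G2) (iota1 (graph_join G1 G2)) (iota2 (graph_join G1 G2))
     (psi1 G1) (psi2 G2)"
  unfolding dprod_def dprod_axioms_def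
  by (intro conjI allI impI group_RACG iota1_hom iota2_hom psi1_hom psi2_hom psi1_iota1 psi2_iota2
      psi1_iota2 psi2_iota1 decomp_RACG comm_RACG)

lemma psi1_surj: "psi1 G1 ` carrier (RACG (graph_join G1 G2)) = carrier (RACG G1)"
proof
  show "psi1 G1 ` carrier (RACG (graph_join G1 G2)) \<subseteq> carrier (RACG G1)"
    using psi1_hom[where ?G1.0=G1 and ?G2.0=G2] by (auto simp: hom_def)
  show "carrier (RACG G1) \<subseteq> psi1 G1 ` carrier (RACG (graph_join G1 G2))"
  proof
    fix X assume X: "X \<in> carrier (RACG G1)"
    then have "iota1 (graph_join G1 G2) X \<in> carrier (RACG (graph_join G1 G2))"
      using iota1_hom[where ?G1.0=G1 and ?G2.0=G2] by (auto simp: hom_def)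
    then show "X \<in> psi1 G1 ` carrier (RACG (graph_join G1 G2))"
      using psi1_iota1[OF X, where ?G2.0=G2] by (metis image_eqI)
  qed
qed

lemma psi2_surj: "psi2 G2 ` carrier (RACG (graph_join G1 G2)) = carrier (RACG G2)"
proof
  show "psi2 G2 ` carrier (RACG (graph_join G1 G2)) \<subseteq> carrier (RACG G2)"
    using psi2_hom[where ?G1.0=G1 and ?G2.0=G2] by (auto simp: hom_def)
  show "carrier (RACG G2) \<subseteq> psi2 G2 ` carrier (RACG (graph_join G1 G2))"
  proof
    fix X assume X: "X \<in> carrier (RACG G2)"
    then have "iota2 (graph_join G1 G2) X \<in> carrier (RACG (graph_join G1 G2))"
      using iota2_hom[where ?G1.0=G1 and ?G2.0=G2] by (auto simp: hom_def)
    then show "X \<in> psi2 G2 ` carrier (RACG (graph_join G1 G2))"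
      using psi2_iota2[OF X, where ?G1.0=G1] by (metis image_eqI)
  qed
qed

lemma gen_by_RACG: "gen_by (RACG G) (gens G)"
  unfolding gen_by_def prodl_def using gens_carrier RACG_generated by blast

lemma finite_sub_RACG: "finite (verts G) \<Longrightarrow> finite (sub_index (RACG G) m)"
  by (rule group.finite_sub_index[OF group_RACG gen_by_RACG finite_gens])

theorem RACG_join_bounds:
  assumes "finite (verts G1)" "finite (verts G2)"
  shows "card (sub_index (RACG G1) n) \<le> card (sub_index (RACG (graph_join G1 G2)) n)"
    "card (sub_index (RACG G2) n) \<le> card (sub_index (RACG (graph_join G1 G2)) n)"
    "card (sub_index (RACG (graph_join G1 G2)) n) \<le> (\<Sum>m\<in>{1..n}. \<Sum>a\<in>{a\<in>{1..n}. m * a \<le> n}.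
        card (sub_index (RACG G1) m) * card (sub_index (RACG G2) a) * m ^ (a * card (gens G2)))"
proof -
  interpret D: dprod "RACG (graph_join G1 G2)" "RACG G1" "RACG G2" "iota1 (graph_join G1 G2)"
    "iota2 (graph_join G1 G2)" "psi1 G1" "psi2 G2"
    by (rule dprod_RACG)
  note uc = D.upper_count[OF gen_by_RACG finite_gens[OF assms(2)] finite_sub_RACG[OF assms(1)] finite_sub_RACG[OF assms(2)]]
  show "card (sub_index (RACG G1) n) \<le> card (sub_index (RACG (graph_join G1 G2)) n)"
    by (rule D.p1h.card_sub_index_le[OF psi1_surj uc(1)])
  show "card (sub_index (RACG G2) n) \<le> card (sub_index (RACG (graph_join G1 G2)) n)"
    by (rule D.p2h.card_sub_index_le[OF psi2_surj uc(1)])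
  show "card (sub_index (RACG (graph_join G1 G2)) n) \<le> (\<Sum>m\<in>{1..n}. \<Sum>a\<in>{a\<in>{1..n}. m * a \<le> n}.
        card (sub_index (RACG G1) m) * card (sub_index (RACG G2) a) * m ^ (a * card (gens G2)))"
    by (rule uc(2))
qed

lemma ratio_nonneg: "0 \<le> ln (real (k::nat)) / (real n * ln (real (n::nat)))"
proof (cases "k = 0")
  case True then show ?thesis by simp
next
  case False
  then have "0 \<le> ln (real k)" by simp
  moreover have "0 \<le> real n * ln (real n)" by (cases "n = 0") auto
  ultimately show ?thesis by simp
qed

lemma bound_from_lim:
  fixes s :: "nat \<Rightarrow> nat" and \<beta> B :: real
  assumes L: "(\<lambda>n. ln (real (s n)) / (real n * ln (real n))) \<longlonglongrightarrow> \<beta>" and lt: "\<beta> < B" and B: "0 < B"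
  shows "\<exists>C\<ge>1. \<forall>m. real (s m) \<le> C * exp (B * (real m * ln (real m)))"
proof -
  have "eventually (\<lambda>n. ln (real (s n)) / (real n * ln (real n)) < B) sequentially"
    using order_tendstoD(2)[OF L lt] .
  then obtain M where M: "\<And>n. n \<ge> M \<Longrightarrow> ln (real (s n)) / (real n * ln (real n)) < B"
    by (auto simp: eventually_sequentially)
  define C where "C = 1 + (\<Sum>m<max M 2. real (s m))"
  have C1: "C \<ge> 1" by (simp add: C_def sum_nonneg)
  have "real (s m) \<le> C * exp (B * (real m * ln (real m)))" for m
  proof (cases "m < max M 2")
    case True
    have e: "1 \<le> exp (B * (real m * ln (real m)))"
    proof -
      have "0 \<le> real m * ln (real m)" by (cases "m = 0") auto
      then have "0 \<le> B * (real m * ln (real m))" using B by simp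
      then show ?thesis by simp
    qed
    have "real (s m) \<le> (\<Sum>m<max M 2. real (s m))"
      using True by (intro member_le_sum) auto
    also have "\<dots> \<le> C" by (simp add: C_def)
    also have "C \<le> C * exp (B * (real m * ln (real m)))" using e C1 by simp
    finally show ?thesis .
  next
    case False
    then have m: "m \<ge> M" "m \<ge> 2" by auto
    have pos: "0 < real m * ln (real m)" using m by simp
    show ?thesis
    proof (cases "s m = 0")
      case True then show ?thesis using C1 by simp
    next
      case False
      have "ln (real (s m)) < B * (real m * ln (real m))"
        using M[OF m(1)] pos by (simp add: divide_less_eq)
      then have "real (s m) < exp (B * (real m * ln (real m)))"
        using False by (metis exp_less_mono exp_ln of_nat_0_less_iff neq0_conv)
      also have "\<dots> \<le> C * exp (B * (real m * ln (real m)))" using C1 by simp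
      finally show ?thesis by simp
    qed
  qed
  then show ?thesis using C1 by blast
qed

lemma term_bound:
  fixes s1 s2 :: "nat \<Rightarrow> nat" and B C :: real and c n m a :: nat
  assumes C: "C \<ge> 1" and B: "B > 0"
    and b1: "\<And>m. real (s1 m) \<le> C * exp (B * (real m * ln (real m)))"
    and b2: "\<And>m. real (s2 m) \<le> C * exp (B * (real m * ln (real m)))"
    and m: "1 \<le> m" "m \<le> n" and a: "1 \<le> a" "a \<le> n" and ma: "m * a \<le> n"
  shows "real (s1 m * s2 a * m ^ (a * c)) \<le> C * C * exp (B * ((real n + 1) * ln (real n)) + real c * real n)"
proof -
  have lnm: "ln (real m) \<le> ln (real n)" using m by simp
  have lna: "ln (real a) \<le> ln (real a) " by simp
  have lnn: "0 \<le> ln (real n)" using m by simp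
  have e1: "real (s1 m) \<le> C * exp (B * (real m * ln (real n)))"
  proof -
    have "B * (real m * ln (real m)) \<le> B * (real m * ln (real n))"
      using lnm B by (intro mult_left_mono) (auto intro: mult_left_mono)
    then have "C * exp (B * (real m * ln (real m))) \<le> C * exp (B * (real m * ln (real n)))"
      using C by (intro mult_left_mono) auto
    then show ?thesis using b1[of m] by linarith
  qed
  have e2: "real (s2 a) \<le> C * exp (B * (real a * ln (real n)))"
  proof -
    have "ln (real a) \<le> ln (real n)" using a by simp
    then have "B * (real a * ln (real a)) \<le> B * (real a * ln (real n))"
      using B by (intro mult_left_mono) (auto intro: mult_left_mono)
    then have "C * exp (B * (real a * ln (real a))) \<le> C * exp (B * (real a * ln (real n)))"
      using C by (intro mult_left_mono) auto
    then show ?thesis using b2[of a] by linarith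
  qed
  have e3: "real m ^ (a * c) \<le> exp (real c * real n)"
  proof -
    have mpos: "0 < real m" using m by simp
    have "ln (real m) \<le> real m - 1" using mpos by (rule ln_le_minus_one)
    then have "real a * ln (real m) \<le> real a * real m" by (intro mult_left_mono) auto
    also have "\<dots> \<le> real n" using ma by (simp add: mult.commute flip: of_nat_mult)
    finally have "real c * (real a * ln (real m)) \<le> real c * real n"
      by (intro mult_left_mono) auto
    then have "real (a * c) * ln (real m) \<le> real c * real n"
      by (simp add: algebra_simps)
    then have A: "exp (real (a * c) * ln (real m)) \<le> exp (real c * real n)" by (simp only: exp_le_cancel_iff)
    moreover have "exp (real (a * c) * ln (real m)) = real m ^ (a * c)"
    proof -
      have "exp (real (a * c) * ln (real m)) = exp (ln (real m)) ^ (a * c)" by (rule exp_of_nat_mult)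
      then show ?thesis using mpos by simp
    qed
    ultimately show ?thesis by (simp only:)
  qed
  have sum_le: "real m + real a \<le> real n + 1"
  proof -
    have "(real m - 1) * (real a - 1) \<ge> 0" using m a by simp
    then have "real m + real a \<le> real m * real a + 1" by (simp add: algebra_simps)
    also have "real m * real a \<le> real n" using ma by (simp flip: of_nat_mult)
    finally show ?thesis by simp
  qed
  have "real (s1 m * s2 a * m ^ (a * c)) = real (s1 m) * real (s2 a) * real m ^ (a * c)" by simp
  also have "\<dots> \<le> (C * exp (B * (real m * ln (real n)))) * (C * exp (B * (real a * ln (real n)))) * exp (real c * real n)"
    using e1 e2 e3 by (intro mult_mono) auto
  also have "\<dots> = C * C * exp (B * ((real m + real a) * ln (real n)) + real c * real n)"
    by (simp add: exp_add[symmetric] algebra_simps)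
  also have "\<dots> \<le> C * C * exp (B * ((real n + 1) * ln (real n)) + real c * real n)"
  proof -
    have "(real m + real a) * ln (real n) \<le> (real n + 1) * ln (real n)"
      using sum_le lnn by (rule mult_right_mono)
    then have "B * ((real m + real a) * ln (real n)) \<le> B * ((real n + 1) * ln (real n))"
      using B by simp
    then show ?thesis using C by simp
  qed
  finally show ?thesis .
qed


lemma ln_ge_1: assumes "n \<ge> (3::nat)" shows "1 \<le> ln (real n)"
proof -
  have "exp 1 \<le> real n" using exp_le assms by linarith
  then have "ln (exp 1) \<le> ln (real n)" using assms by (subst ln_le_cancel_iff) auto
  then show ?thesis by simp
qed

lemma sum_bound:
  fixes s1 s2 :: "nat \<Rightarrow> nat" and B C :: real and c n :: nat
  assumes C: "C \<ge> 1" and B: "B > 0"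
    and b1: "\<And>m. real (s1 m) \<le> C * exp (B * (real m * ln (real m)))"
    and b2: "\<And>m. real (s2 m) \<le> C * exp (B * (real m * ln (real m)))"
  shows "real (\<Sum>m\<in>{1..n}. \<Sum>a\<in>{a\<in>{1..n}. m * a \<le> n}. s1 m * s2 a * m ^ (a * c))
     \<le> real n * real n * (C * C * exp (B * ((real n + 1) * ln (real n)) + real c * real n))"
proof -
  define T where "T = C * C * exp (B * ((real n + 1) * ln (real n)) + real c * real n)"
  have T0: "0 \<le> T" using C by (simp add: T_def)
  have "real (\<Sum>m\<in>{1..n}. \<Sum>a\<in>{a\<in>{1..n}. m * a \<le> n}. s1 m * s2 a * m ^ (a * c))
      = (\<Sum>m\<in>{1..n}. \<Sum>a\<in>{a\<in>{1..n}. m * a \<le> n}. real (s1 m * s2 a * m ^ (a * c)))"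
    by (simp only: of_nat_sum)
  also have "\<dots> \<le> (\<Sum>m\<in>{1..n}. \<Sum>a\<in>{a\<in>{1..n}. m * a \<le> n}. T)"
    unfolding T_def
    by (intro sum_mono term_bound[OF C B b1 b2]) auto
  also have "\<dots> \<le> (\<Sum>m\<in>{1..n}. real n * T)"
  proof (intro sum_mono)
    fix m
    have "card {a\<in>{1..n}. m * a \<le> n} \<le> card {1..n}" by (intro card_mono) auto
    then have "real (card {a\<in>{1..n}. m * a \<le> n}) \<le> real n" by simp
    then show "(\<Sum>a\<in>{a\<in>{1..n}. m * a \<le> n}. T) \<le> real n * T"
      using T0 by (simp add: mult_right_mono)
  qed
  also have "\<dots> = real n * real n * T" by simp
  finally show ?thesis by (simp add: T_def)
qed

lemma lim_aux: "(\<lambda>n. K / real n + c / ln (real n) + B) \<longlonglongrightarrow> (B::real)"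
proof -
  have r: "filterlim (\<lambda>n. real n) at_infinity sequentially"
    by (rule filterlim_at_top_imp_at_infinity[OF filterlim_real_sequentially])
  have l: "filterlim (\<lambda>n. ln (real n)) at_infinity sequentially"
    by (rule filterlim_at_top_imp_at_infinity[OF filterlim_compose[OF ln_at_top filterlim_real_sequentially]])
  have "(\<lambda>n. K / real n + c / ln (real n) + B) \<longlonglongrightarrow> 0 + 0 + B"
    by (intro tendsto_add tendsto_const tendsto_divide_0[OF tendsto_const r] tendsto_divide_0[OF tendsto_const l])
  then show ?thesis by simp
qed

theorem asym:
  fixes s1 s2 sJ :: "nat \<Rightarrow> nat" and c :: nat and \<beta>1 \<beta>2 :: real
  assumes L1: "(\<lambda>n. ln (real (s1 n)) / (real n * ln (real n))) \<longlonglongrightarrow> \<beta>1"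
    and L2: "(\<lambda>n. ln (real (s2 n)) / (real n * ln (real n))) \<longlonglongrightarrow> \<beta>2"
    and pos1: "\<beta>1 > 0" and pos2: "\<beta>2 > 0"
    and low1: "\<And>n. s1 n \<le> sJ n" and low2: "\<And>n. s2 n \<le> sJ n"
    and up: "\<And>n. sJ n \<le> (\<Sum>m\<in>{1..n}. \<Sum>a\<in>{a\<in>{1..n}. m * a \<le> n}. s1 m * s2 a * m ^ (a * c))"
  shows "(\<lambda>n. ln (real (sJ n)) / (real n * ln (real n))) \<longlonglongrightarrow> max \<beta>1 \<beta>2"
proof (rule order_tendstoI)
  have mono: "eventually (\<lambda>n. ln (real (s n)) / (real n * ln (real n)) \<le> ln (real (sJ n)) / (real n * ln (real n))) sequentially"
    if le: "\<And>n. s n \<le> sJ n" for s :: "nat \<Rightarrow> nat"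
  proof -
    have "ln (real (s n)) / (real n * ln (real n)) \<le> ln (real (sJ n)) / (real n * ln (real n))" if n: "n \<ge> 2" for n
    proof -
      have den: "0 < real n * ln (real n)" using n by simp
      have "ln (real (s n)) \<le> ln (real (sJ n))"
      proof (cases "s n = 0")
        case True
        then show ?thesis by (cases "sJ n = 0") auto
      next
        case False
        then show ?thesis using le[of n] by simp
      qed
      then show ?thesis using den by (simp add: divide_right_mono)
    qed
    then show ?thesis unfolding eventually_sequentially by blast
  qed
  fix y assume y: "y < max \<beta>1 \<beta>2"
  then have "y < \<beta>1 \<or> y < \<beta>2" by (simp add: less_max_iff_disj)
  then show "eventually (\<lambda>n. y < ln (real (sJ n)) / (real n * ln (real n))) sequentially"
  proof
    assume "y < \<beta>1"
    then have ev: "eventually (\<lambda>n. y < ln (real (s1 n)) / (real n * ln (real n))) sequentially"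
      by (rule order_tendstoD(1)[OF L1])
    show ?thesis using eventually_conj[OF ev mono[OF low1]] by (rule eventually_mono) linarith
  next
    assume "y < \<beta>2"
    then have ev: "eventually (\<lambda>n. y < ln (real (s2 n)) / (real n * ln (real n))) sequentially"
      by (rule order_tendstoD(1)[OF L2])
    show ?thesis using eventually_conj[OF ev mono[OF low2]] by (rule eventually_mono) linarith
  qed
next
  fix y assume y: "max \<beta>1 \<beta>2 < y"
  define \<delta> where "\<delta> = (y - max \<beta>1 \<beta>2) / 2"
  define B where "B = max \<beta>1 \<beta>2 + \<delta>"
  have \<delta>: "\<delta> > 0" using y by (simp add: \<delta>_def)
  have mx: "\<beta>1 \<le> max \<beta>1 \<beta>2" "\<beta>2 \<le> max \<beta>1 \<beta>2" by auto
  have B: "B > 0" "\<beta>1 < B" "\<beta>2 < B" "B + \<delta> = y" using \<delta> pos1 pos2 mx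
    unfolding B_def \<delta>_def by (linarith, linarith, linarith, simp add: field_simps)
  obtain C1 where C1: "C1 \<ge> 1" "\<And>m. real (s1 m) \<le> C1 * exp (B * (real m * ln (real m)))"
    using bound_from_lim[OF L1 B(2) B(1)] by blast
  obtain C2 where C2: "C2 \<ge> 1" "\<And>m. real (s2 m) \<le> C2 * exp (B * (real m * ln (real m)))"
    using bound_from_lim[OF L2 B(3) B(1)] by blast
  define C where "C = max C1 C2"
  have C: "C \<ge> 1" using C1 by (simp add: C_def)
  have b1: "real (s1 m) \<le> C * exp (B * (real m * ln (real m)))" for m
  proof -
    have "C1 * exp (B * (real m * ln (real m))) \<le> C * exp (B * (real m * ln (real m)))"
      by (intro mult_right_mono) (auto simp: C_def)
    then show ?thesis using C1(2)[of m] by linarith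
  qed
  have b2: "real (s2 m) \<le> C * exp (B * (real m * ln (real m)))" for m
  proof -
    have "C2 * exp (B * (real m * ln (real m))) \<le> C * exp (B * (real m * ln (real m)))"
      by (intro mult_right_mono) (auto simp: C_def)
    then show ?thesis using C2(2)[of m] by linarith
  qed
  define K where "K = 2 + 2 * ln C + B"
  have lnC: "0 \<le> ln C" using C by simp
  have key: "ln (real (sJ n)) / (real n * ln (real n)) \<le> K / real n + real c / ln (real n) + B"
    if n: "n \<ge> 3" for n
  proof -
    have ln1: "1 \<le> ln (real n)" using ln_ge_1[OF n] .
    have np: "0 < real n" using n by simp
    have den: "0 < real n * ln (real n)" using np ln1 by (intro mult_pos_pos) linarith+
    define X where "X = 2 * ln (real n) + 2 * ln C + B * ((real n + 1) * ln (real n)) + real c * real n"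
    have "ln (real (sJ n)) \<le> X"
    proof (cases "sJ n = 0")
      case True
      have "0 \<le> X" using ln1 lnC B np by (simp add: X_def)
      then show ?thesis using True by simp
    next
      case False
      have "real (sJ n) \<le> real n * real n * (C * C * exp (B * ((real n + 1) * ln (real n)) + real c * real n))"
      proof -
        have "real (sJ n) \<le> real (\<Sum>m\<in>{1..n}. \<Sum>a\<in>{a\<in>{1..n}. m * a \<le> n}. s1 m * s2 a * m ^ (a * c))"
          using up[of n] by (simp only: of_nat_le_iff)
        also have "\<dots> \<le> real n * real n * (C * C * exp (B * ((real n + 1) * ln (real n)) + real c * real n))"
          by (rule sum_bound[OF C B(1) b1 b2])
        finally show ?thesis .
      qed
      then have "ln (real (sJ n)) \<le> ln (real n * real n * (C * C * exp (B * ((real n + 1) * ln (real n)) + real c * real n)))"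
        using False by (subst ln_le_cancel_iff) auto
      also have "\<dots> = X" using np C by (simp add: X_def ln_mult)
      finally show ?thesis .
    qed
    also have "X \<le> (K / real n + real c / ln (real n) + B) * (real n * ln (real n))"
    proof -
      have "(K / real n + real c / ln (real n) + B) * (real n * ln (real n))
          = K * ln (real n) + real c * real n + B * (real n * ln (real n))"
      proof -
        have "ln (real n) \<noteq> 0" "real n \<noteq> 0" using np ln1 by linarith+
        then show ?thesis by (simp add: field_simps)
      qed
      moreover have "2 * ln C * 1 \<le> 2 * ln C * ln (real n)" using lnC ln1 by (intro mult_left_mono) auto
      ultimately show ?thesis by (simp add: X_def K_def algebra_simps)
    qed
    finally show ?thesis using den by (simp add: divide_le_eq)
  qed
  have "eventually (\<lambda>n. K / real n + real c / ln (real n) + B < y) sequentially"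
    using order_tendstoD(2)[OF lim_aux[of K "real c" B]] B(4) \<delta> by simp
  moreover have "eventually (\<lambda>n. n \<ge> 3) sequentially" by (rule eventually_ge_at_top)
  ultimately show "eventually (\<lambda>n. ln (real (sJ n)) / (real n * ln (real n)) < y) sequentially"
    by eventually_elim (use key in fastforce)
qed

definition irel :: "'a graph \<Rightarrow> 'a set \<Rightarrow> ('a \<times> 'a) set" where
  "irel G C = {(u, v). u \<in> C \<and> v \<in> C \<and> adj G u v}"

lemma induced_component_irel: "induced_component G C x = {y \<in> C. (x, y) \<in> (irel G C)\<^sup>*}"
  by (simp add: induced_component_def irel_def)

lemma rtrancl_inj_image:
  assumes inj: "inj f"
  shows "(f x, f y) \<in> (map_prod f f ` R)\<^sup>* \<longleftrightarrow> (x, y) \<in> R\<^sup>*"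
proof
  assume "(x, y) \<in> R\<^sup>*"
  then show "(f x, f y) \<in> (map_prod f f ` R)\<^sup>*"
  proof (induction rule: rtrancl_induct)
    case base then show ?case by simp
  next
    case (step y z)
    then have "(f y, f z) \<in> map_prod f f ` R" by force
    with step.IH show ?case by (rule rtrancl_into_rtrancl)
  qed
next
  assume a: "(f x, f y) \<in> (map_prod f f ` R)\<^sup>*"
  have "\<forall>y. b = f y \<longrightarrow> (x, y) \<in> R\<^sup>*" if "(f x, b) \<in> (map_prod f f ` R)\<^sup>*" for b
    using that
  proof (induction rule: rtrancl_induct)
    case base then show ?case using inj by (auto dest: injD)
  next
    case (step y' z)
    show ?case
    proof (intro allI impI)
      fix y assume z: "z = f y"
      obtain u v where uv: "(u, v) \<in> R" "y' = f u" "z = f v" using step.hyps(2) by auto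
      then have "v = y" using z inj by (auto dest: injD)
      moreover have "(x, u) \<in> R\<^sup>*" using step.IH uv by blast
      ultimately show "(x, y) \<in> R\<^sup>*" using uv(1) by (auto intro: rtrancl_into_rtrancl)
    qed
  qed
  then show "(x, y) \<in> R\<^sup>*" using a by blast
qed

locale graph_emb =
  fixes G :: "'a graph" and G' :: "'c graph" and f :: "'a \<Rightarrow> 'c" and D :: "'a set"
  assumes inj: "inj f" and adj_iff: "\<And>x y. x \<in> D \<Longrightarrow> y \<in> D \<Longrightarrow> adj G' (f x) (f y) \<longleftrightarrow> adj G x y"
begin

lemma irel_img: "irel G' (f ` D) = map_prod f f ` irel G D"
  using adj_iff by (auto simp: irel_def image_iff)

lemma comp_img: "x \<in> D \<Longrightarrow> induced_component G' (f ` D) (f x) = f ` induced_component G D x"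
  unfolding induced_component_irel irel_img
  using rtrancl_inj_image[OF inj, of x _ "irel G D"] inj by (auto simp: inj_def)

lemma comps_img: "induced_components G' (f ` D) = (\<lambda>K. f ` K) ` induced_components G D"
  unfolding induced_components_def using comp_img by (auto simp: image_image)

lemma comp_sub: "induced_component G D x \<subseteq> D"
  by (auto simp: induced_component_def)

lemma comps_sub: "K \<in> induced_components G D \<Longrightarrow> K \<subseteq> D"
  using comp_sub by (auto simp: induced_components_def)

lemma cc_iff:
  assumes "D \<subseteq> verts G" "f ` D \<subseteq> verts G'"
  shows "clique_collection G' (f ` D) \<longleftrightarrow> clique_collection G D"
proof -
  have "(\<forall>K'\<in>induced_components G' (f ` D). \<forall>v\<in>K'. \<forall>w\<in>K'. v \<noteq> w \<longrightarrow> adj G' v w)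
     \<longleftrightarrow> (\<forall>K\<in>induced_components G D. \<forall>v\<in>K. \<forall>w\<in>K. v \<noteq> w \<longrightarrow> adj G v w)"
  proof -
    have "(\<forall>v\<in>f ` K. \<forall>w\<in>f ` K. v \<noteq> w \<longrightarrow> adj G' v w) \<longleftrightarrow> (\<forall>v\<in>K. \<forall>w\<in>K. v \<noteq> w \<longrightarrow> adj G v w)"
      if K: "K \<in> induced_components G D" for K
    proof -
      have KD: "K \<subseteq> D" using comps_sub[OF K] .
      show ?thesis
      proof
        assume A: "\<forall>v\<in>f ` K. \<forall>w\<in>f ` K. v \<noteq> w \<longrightarrow> adj G' v w"
        show "\<forall>v\<in>K. \<forall>w\<in>K. v \<noteq> w \<longrightarrow> adj G v w"
        proof (intro ballI impI)
          fix v w assume vw: "v \<in> K" "w \<in> K" "v \<noteq> w"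
          then have "f v \<noteq> f w" using inj by (auto simp: inj_def)
          then have "adj G' (f v) (f w)" using A vw by blast
          then show "adj G v w" using adj_iff KD vw by blast
        qed
      next
        assume A: "\<forall>v\<in>K. \<forall>w\<in>K. v \<noteq> w \<longrightarrow> adj G v w"
        show "\<forall>v\<in>f ` K. \<forall>w\<in>f ` K. v \<noteq> w \<longrightarrow> adj G' v w"
        proof (intro ballI impI)
          fix v' w' assume vw': "v' \<in> f ` K" "w' \<in> f ` K" "v' \<noteq> w'"
          then obtain v w where vw: "v \<in> K" "w \<in> K" "v' = f v" "w' = f w" by auto
          then have "v \<noteq> w" using vw' by auto
          then have "adj G v w" using A vw by blast
          then show "adj G' v' w'" using adj_iff KD vw by blast
        qed
      qed
    qed
    then show ?thesis by (simp add: comps_img)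
  qed
  then show ?thesis using assms by (simp add: clique_collection_def)
qed

lemma weight_eq: "cc_weight G' (f ` D) = cc_weight G D"
proof -
  have ij: "inj_on (\<lambda>K. f ` K) (induced_components G D)"
    using inj by (auto simp: inj_on_def inj_image_eq_iff)
  have "cc_weight G' (f ` D) = (\<Sum>K\<in>induced_components G D. 1 - 2 powi (- int (card (f ` K))))"
    unfolding cc_weight_def comps_img by (simp add: sum.reindex[OF ij])
  also have "\<dots> = cc_weight G D"
    unfolding cc_weight_def using card_image[OF inj_on_subset[OF inj subset_UNIV]] by simp
  finally show ?thesis .
qed

end

lemma cc_sets_finite: "finite (verts G) \<Longrightarrow> finite {C. clique_collection G C}"
  by (rule finite_subset[of _ "Pow (verts G)"]) (auto simp: clique_collection_def)

lemma cc_empty: "clique_collection G {}"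
  by (simp add: clique_collection_def induced_components_def)

lemma gamma_ge: "finite (verts G) \<Longrightarrow> clique_collection G C \<Longrightarrow> cc_weight G C \<le> gamma G"
  unfolding gamma_def by (rule Max_ge) (auto intro: cc_sets_finite)

lemma gamma_attained: "finite (verts G) \<Longrightarrow> \<exists>C. clique_collection G C \<and> cc_weight G C = gamma G"
proof -
  assume f: "finite (verts G)"
  have "gamma G \<in> cc_weight G ` {C. clique_collection G C}"
    unfolding gamma_def using cc_sets_finite[OF f] cc_empty[of G] by (intro Max_in) auto
  then show ?thesis by auto
qed

lemma gamma_noncomplete:
  assumes fsg: "finite_simple_graph G" and nc: "\<not> complete_graph G"
  shows "1 \<le> gamma G"
proof -
  obtain v w where vw: "v \<in> verts G" "w \<in> verts G" "v \<noteq> w" "\<not> adj G v w"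
    using nc by (auto simp: complete_graph_def)
  have wv: "\<not> adj G w v" "\<not> adj G v v" "\<not> adj G w w"
    using fsg vw by (auto simp: finite_simple_graph_def)
  have R: "irel G {v, w} = {}" using vw wv by (auto simp: irel_def)
  have cv: "induced_component G {v, w} v = {v}" "induced_component G {v, w} w = {w}"
    unfolding induced_component_irel R by auto
  have cs: "induced_components G {v, w} = {{v}, {w}}"
    unfolding induced_components_def using cv by auto
  have "clique_collection G {v, w}" using vw cs by (auto simp: clique_collection_def)
  moreover have "cc_weight G {v, w} = 1"
    using vw(3) by (simp add: cc_weight_def cs)
  ultimately show ?thesis using gamma_ge[of G "{v, w}"] fsg by (simp add: finite_simple_graph_def)
qed


lemma mixed_weight:
  assumes a: "Inl a \<in> C" and b: "Inr b \<in> C"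
  shows "cc_weight (graph_join G1 G2) C \<le> 1"
proof -
  define J where "J = graph_join G1 G2"
  have adjLR: "adj J (Inl p) (Inr q)" "adj J (Inr q) (Inl p)" for p q by (simp_all add: J_def adj_join)
  have path: "(x, y) \<in> (irel J C)\<^sup>*" if x: "x \<in> C" and y: "y \<in> C" for x y
  proof (cases x)
    case (Inl p)
    show ?thesis
    proof (cases y)
      case (Inl q)
      have "(x, Inr b) \<in> irel J C" "(Inr b, y) \<in> irel J C" using x y b Inl \<open>x = Inl p\<close> adjLR by (auto simp: irel_def)
      then show ?thesis by (meson r_into_rtrancl rtrancl_into_rtrancl)
    next
      case (Inr q)
      have "(x, y) \<in> irel J C" using x y Inr \<open>x = Inl p\<close> adjLR by (auto simp: irel_def)
      then show ?thesis by (rule r_into_rtrancl)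
    qed
  next
    case (Inr p)
    show ?thesis
    proof (cases y)
      case (Inr q)
      have "(x, Inl a) \<in> irel J C" "(Inl a, y) \<in> irel J C" using x y a Inr \<open>x = Inr p\<close> adjLR by (auto simp: irel_def)
      then show ?thesis by (meson r_into_rtrancl rtrancl_into_rtrancl)
    next
      case (Inl q)
      have "(x, y) \<in> irel J C" using x y Inl \<open>x = Inr p\<close> adjLR by (auto simp: irel_def)
      then show ?thesis by (rule r_into_rtrancl)
    qed
  qed
  have "induced_component J C x = C" if "x \<in> C" for x
    using path[OF that] by (auto simp: induced_component_irel)
  then have "induced_components J C = {C}" using a by (auto simp: induced_components_def)
  then have "cc_weight J C = 1 - 2 powi (- int (card C))" by (simp add: cc_weight_def)
  moreover have "0 < (2::real) powi (- int (card C))" by simp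
  ultimately show ?thesis by (simp add: J_def)
qed

theorem gamma_join:
  assumes f1: "finite_simple_graph G1" and f2: "finite_simple_graph G2"
    and nc: "\<not> complete_graph G1 \<or> \<not> complete_graph G2"
  shows "gamma (graph_join G1 G2) = max (gamma G1) (gamma G2)"
proof -
  define J where "J = graph_join G1 G2"
  have fv1: "finite (verts G1)" and fv2: "finite (verts G2)" using f1 f2 by (auto simp: finite_simple_graph_def)
  have fJ: "finite (verts J)" using fv1 fv2 by (simp add: J_def verts_join)
  have e1: "graph_emb G1 J Inl D" for D by unfold_locales (auto simp: J_def adj_join inj_def)
  have e2: "graph_emb G2 J Inr D" for D by unfold_locales (auto simp: J_def adj_join inj_def)
  have vL: "Inl ` D \<subseteq> verts J \<longleftrightarrow> D \<subseteq> verts G1" for D by (auto simp: J_def verts_join)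
  have vR: "Inr ` D \<subseteq> verts J \<longleftrightarrow> D \<subseteq> verts G2" for D by (auto simp: J_def verts_join)
  have lo1: "gamma G1 \<le> gamma J"
  proof -
    obtain D where D: "clique_collection G1 D" "cc_weight G1 D = gamma G1" using gamma_attained[OF fv1] by blast
    have DV: "D \<subseteq> verts G1" using D(1) by (simp add: clique_collection_def)
    have "clique_collection J (Inl ` D)" using graph_emb.cc_iff[OF e1 DV] DV vL D(1) by blast
    moreover have "cc_weight J (Inl ` D) = gamma G1" using graph_emb.weight_eq[OF e1] D(2) by simp
    ultimately show ?thesis using gamma_ge[OF fJ] by metis
  qed
  have lo2: "gamma G2 \<le> gamma J"
  proof -
    obtain D where D: "clique_collection G2 D" "cc_weight G2 D = gamma G2" using gamma_attained[OF fv2] by blast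
    have DV: "D \<subseteq> verts G2" using D(1) by (simp add: clique_collection_def)
    have "clique_collection J (Inr ` D)" using graph_emb.cc_iff[OF e2 DV] DV vR D(1) by blast
    moreover have "cc_weight J (Inr ` D) = gamma G2" using graph_emb.weight_eq[OF e2] D(2) by simp
    ultimately show ?thesis using gamma_ge[OF fJ] by metis
  qed
  have up: "gamma J \<le> max (gamma G1) (gamma G2)"
  proof -
    obtain C where C: "clique_collection J C" "cc_weight J C = gamma J" using gamma_attained[OF fJ] by blast
    have CV: "C \<subseteq> verts J" using C(1) by (simp add: clique_collection_def)
    show ?thesis
    proof (cases "\<exists>a b. Inl a \<in> C \<and> Inr b \<in> C")
      case True
      then obtain a b where "Inl a \<in> C" "Inr b \<in> C" by blast
      then have "cc_weight J C \<le> 1" using mixed_weight by (simp add: J_def)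
      moreover have "1 \<le> max (gamma G1) (gamma G2)"
        using nc gamma_noncomplete[OF f1] gamma_noncomplete[OF f2] by (auto simp: le_max_iff_disj)
      ultimately show ?thesis using C(2) by simp
    next
      case False
      then have "C \<subseteq> range Inl \<or> C \<subseteq> range Inr"
        by (metis (full_types) image_iff old.sum.exhaust rangeI subsetI)
      then show ?thesis
      proof
        assume "C \<subseteq> range Inl"
        then have CD: "C = Inl ` (Inl -` C)" by auto
        have DV: "Inl -` C \<subseteq> verts G1" using CV vL CD by blast
        have "clique_collection G1 (Inl -` C)"
          using graph_emb.cc_iff[OF e1 DV] CD CV C(1) by simp
        moreover have "cc_weight J C = cc_weight G1 (Inl -` C)"
          using graph_emb.weight_eq[OF e1, of "Inl -` C"] CD by simp
        ultimately have "gamma J \<le> gamma G1" using gamma_ge[OF fv1] C(2) by metis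
        then show ?thesis by simp
      next
        assume "C \<subseteq> range Inr"
        then have CD: "C = Inr ` (Inr -` C)" by auto
        have DV: "Inr -` C \<subseteq> verts G2" using CV vR CD by blast
        have "clique_collection G2 (Inr -` C)"
          using graph_emb.cc_iff[OF e2 DV] CD CV C(1) by simp
        moreover have "cc_weight J C = cc_weight G2 (Inr -` C)"
          using graph_emb.weight_eq[OF e2, of "Inr -` C"] CD by simp
        ultimately have "gamma J \<le> gamma G2" using gamma_ge[OF fv2] C(2) by metis
        then show ?thesis by simp
      qed
    qed
  qed
  show ?thesis using lo1 lo2 up by (simp add: J_def)
qed

theorem mainTheorem3:
  fixes G1 :: "'a graph" and G2 :: "'b graph" and \<beta>1 \<beta>2 :: real
  assumes "finite_simple_graph G1" and "finite_simple_graph G2"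
    and "\<beta>1 > 0" and "\<beta>2 > 0"
    and "(\<lambda>n. ln (real (num_subgroups_index (RACG G1) n)) / (real n * ln (real n)))
           \<longlonglongrightarrow> \<beta>1"
    and "(\<lambda>n. ln (real (num_subgroups_index (RACG G2) n)) / (real n * ln (real n)))
           \<longlonglongrightarrow> \<beta>2"
  shows "((\<lambda>n. ln (real (num_subgroups_index (RACG (graph_join G1 G2)) n)) / (real n * ln (real n)))
           \<longlonglongrightarrow> max \<beta>1 \<beta>2) \<and>
         ((\<not> complete_graph G1 \<or> \<not> complete_graph G2) \<longrightarrow>
           gamma (graph_join G1 G2) = max (gamma G1) (gamma G2))"
  proof -
  have fv1: "finite (verts G1)" and fv2: "finite (verts G2)"
    using assms(1,2) by (auto simp: finite_simple_graph_def)
  note bnds = RACG_join_bounds[OF fv1 fv2]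
  have lim: "(\<lambda>n. ln (real (card (sub_index (RACG (graph_join G1 G2)) n))) / (real n * ln (real n)))
      \<longlonglongrightarrow> max \<beta>1 \<beta>2"
    by (rule asym[where ?s1.0="\<lambda>n. card (sub_index (RACG G1) n)" and ?s2.0="\<lambda>n. card (sub_index (RACG G2) n)"
          and c="card (gens G2)"])
      (use assms(3-6) bnds in \<open>simp_all add: num_sub_index\<close>)
  show ?thesis
    using lim gamma_join[OF assms(1,2)] by (simp add: num_sub_index)
qed

end
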